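(* For every $k\ge1$, a transduction $f:\Sigma^*\rightharpoonup\Gamma^*$ is $k$-lexicographic (i.e. belongs to $\mathsf{Lex}_k$) if and only if it is $k$-lexicographic automatic.
   Context: Alphabets are finite. For words $u,v$ of equal length over alphabets $\Sigma_1,\Sigma_2$, $u\otimes v$ is the word over $\Sigma_1\times\Sigma_2$ with $(u\otimes v)[i]=(u[i],v[i])$. A transduction is a partial function $f:\Sigma^*\rightharpoonup\Gamma^*$. A simple transduction is a transduction $f=\sum_{i=1}^n L_i\triangleright w_i$, where $L_1,\dots,L_n\subseteq\Sigma^*$ are pairwise disjoint regular languages and each $w_i\in\Gamma^{\le 1}$ is a word of length at most 1. It satisfies $f(u)=w_i$ if $u\in L_i$, and $f(u)$ is undefined if $u\notin\bigcup_iL_i$. An ordered alphabet is a pair $\lambda=(B,\prec)$ with $B$ a finite set and $\prec$ a strict linear order on $B$. The order is extended to $B^n$ for each $n$ by: $u\prec v$ iff there is $i\le n$ with $u[i]\prec v[i]$ and $u[j]=v[j]$ for all $i<j\le n$ (most significant letter on the right). For a transduction $f:(\Sigma\times B)^*\rightharpoonup\Gamma^*$, the transduction $\mathsf{maplex}_\lambda f:\Sigma^*\rightharpoonup\Gamma^*$ maps $u$ to $f(u\otimes b_1)f(u\otimes b_2)\cdots f(u\otimes b_m)$, where $b_1\prec\cdots\prec b_m$ is the increasing enumeration of all of $B^{|u|}$. It is defined on $u$ iff every $f(u\otimes b_j)$ is defined. The classes are defined inductively: - $\mathsf{Lex}_0$ is the class of simple transductions; - $\mathsf{Lex}_{k+1}=\{\mathsf{maplex}_\lambda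 f: \lambda=(B,\prec)\text{ an ordered alphabet},\ f:(\Sigma\times B)^*\rightharpoonup\Gamma^*\text{ in }\mathsf{Lex}_k\}$; - $\mathsf{Lex}=\bigcup_k\mathsf{Lex}_k$, the lexicographic transductions. Elements of $\mathsf{Lex}_k$ are called $k$-lexicographic. A $k$-lexicographic automatic transducer from $\Sigma^*$ to $\Gamma^*$ consists of: - ordered alphabets $\lambda_i=(B_i,\prec_i)$, $1\le i\le k$, with $B=B_1\times\cdots\times B_k$; - finite automata $A_{dom}$ over $\Sigma$, $A_{univ}$ over $\Sigma\times B$, and $A_\gamma$ over $\Sigma\times B$ for each $\gamma\in\Gamma$. These must satisfy: for every $u\in L(A_{dom})$ and every $x$ with $u\otimes x\in L(A_{univ})$, exactly one $\gamma$ has $u\otimes x\in L(A_\gamma)$. For $x=x_1\otimes\cdots\otimes x_k$ and $y=y_1\otimes\cdots\otimes y_k$ with $x_i,y_i\in B_i^n$, let $x\prec_{\bar\lambda}y$ iff there is $i$ with $x_i\prec_i y_i$ (in the lexicographic extension) and $x_j=y_j$ for all $j<i$. On $u\in L(A_{dom})$, the output is the word whose positions are the elements of $V=\{x\in B^{|u|}: u\otimes x\in L(A_{univ})\}$ in increasing $\prec_{\bar\lambda}$-order, position $x$ carrying the label $\gamma$ with $u\otimes x\in L(A_\gamma)$. The output is undefined if $u\notin L(A_{dom})$. A transduction is $k$-lexicographic automatic if it is defined by such a transducer. *)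

theory Defs
  imports Main
begin

definition nfa_reach :: "(nat \<Rightarrow> 'c \<Rightarrow> nat set) \<Rightarrow> nat set \<Rightarrow> 'c list \<Rightarrow> nat set" where
  "nfa_reach d S w = foldl (\<lambda>S a. \<Union>q\<in>S. d q a) S w"

definition nfa_lang ::
  "'c set \<Rightarrow> nat set \<Rightarrow> nat set \<Rightarrow> (nat \<Rightarrow> 'c \<Rightarrow> nat set) \<Rightarrow> nat set \<Rightarrow> 'c list set" where
  "nfa_lang A Q I d F = {w \<in> lists A. nfa_reach d I w \<inter> F \<noteq> {}}"

definition is_nfa :: "'c set \<Rightarrow> nat set \<Rightarrow> nat set \<Rightarrow> (nat \<Rightarrow> 'c \<Rightarrow> nat set) \<Rightarrow> nat set \<Rightarrow> bool" where
  "is_nfa A Q I d F \<longleftrightarrow> finite Q \<and> I \<subseteq> Q \<and> F \<subseteq> Q \<and> (\<forall>q\<in>Q. \<forall>a\<in>A. d q a \<subseteq> Q)"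

definition regular_on :: "'c set \<Rightarrow> 'c list set \<Rightarrow> bool" where
  "regular_on A L \<longleftrightarrow> (\<exists>Q I d F. is_nfa A Q I d F \<and> L = nfa_lang A Q I d F)"

text \<open>An ordered alphabet (B, r): a finite set B (of naturals; every finite set is in bijection
  with such a set) with a strict linear order r on B.\<close>
definition ordered_alphabet :: "nat set \<Rightarrow> (nat \<Rightarrow> nat \<Rightarrow> bool) \<Rightarrow> bool" where
  "ordered_alphabet B r \<longleftrightarrow> finite B \<and> (\<forall>x\<in>B. \<not> r x x)
     \<and> (\<forall>x\<in>B. \<forall>y\<in>B. \<forall>z\<in>B. r x y \<longrightarrow> r y z \<longrightarrow> r x z)
     \<and> (\<forall>x\<in>B. \<forall>y\<in>B. x \<noteq> y \<longrightarrow> r x y \<or> r y x)"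

text \<open>Extension to B^n, most significant letter on the right (0-based positions).\<close>
definition lexr :: "(nat \<Rightarrow> nat \<Rightarrow> bool) \<Rightarrow> nat list \<Rightarrow> nat list \<Rightarrow> bool" where
  "lexr r x y \<longleftrightarrow> (\<exists>i < length x. r (x ! i) (y ! i) \<and> (\<forall>j. i < j \<and> j < length x \<longrightarrow> x ! j = y ! j))"

definition words_of_len :: "'b set \<Rightarrow> nat \<Rightarrow> 'b list set" where
  "words_of_len B n = {x \<in> lists B. length x = n}"

definition sorted_enum :: "('x \<Rightarrow> 'x \<Rightarrow> bool) \<Rightarrow> 'x set \<Rightarrow> 'x list" where
  "sorted_enum R V = (THE xs. set xs = V \<and> sorted_wrt R xs)"

text \<open>Letters of the alphabet \<Sigma> \<times> B_1 \<times> ... \<times> B_j are encoded as pairs (\<sigma>, [b_1,...,b_j]).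
  Transductions are partial functions, encoded with option; only their values on words over
  the relevant alphabet A matter.\<close>

definition ext_alph :: "('a \<times> nat list) set \<Rightarrow> nat set \<Rightarrow> ('a \<times> nat list) set" where
  "ext_alph A B = {(a, bs @ [b]) | a bs b. (a, bs) \<in> A \<and> b \<in> B}"

text \<open>u \<otimes> x, for u over \<Sigma> \<times> B_1 \<times> ... \<times> B_j and x over B_{j+1}.\<close>
definition comb :: "('a \<times> nat list) list \<Rightarrow> nat list \<Rightarrow> ('a \<times> nat list) list" where
  "comb u x = map (\<lambda>((a, bs), b). (a, bs @ [b])) (zip u x)"

definition maplex :: "nat set \<Rightarrow> (nat \<Rightarrow> nat \<Rightarrow> bool)
    \<Rightarrow> (('a \<times> nat list) list \<Rightarrow> 'g list option) \<Rightarrow> ('a \<times> nat list) list \<Rightarrow> 'g list option" where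
  "maplex B r g u =
     (let xs = sorted_enum (lexr r) (words_of_len B (length u)) in
      if (\<forall>x\<in>set xs. g (comb u x) \<noteq> None)
      then Some (concat (map (\<lambda>x. the (g (comb u x))) xs)) else None)"

definition simple_trans :: "'c set \<Rightarrow> ('c list \<Rightarrow> 'g list option) \<Rightarrow> bool" where
  "simple_trans A f \<longleftrightarrow> (\<exists>(n::nat) (L :: nat \<Rightarrow> 'c list set) (w :: nat \<Rightarrow> 'g list).
      (\<forall>i<n. regular_on A (L i) \<and> length (w i) \<le> 1)
    \<and> (\<forall>i<n. \<forall>j<n. i \<noteq> j \<longrightarrow> L i \<inter> L j = {})
    \<and> (\<forall>i<n. \<forall>u\<in>L i. f u = Some (w i))
    \<and> (\<forall>u\<in>lists A. (\<forall>i<n. u \<notin> L i) \<longrightarrow> f u = None))"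

primrec LexG :: "nat \<Rightarrow> ('a \<times> nat list) set \<Rightarrow> (('a \<times> nat list) list \<Rightarrow> 'g list option) \<Rightarrow> bool" where
  "LexG 0 A f = simple_trans A f"
| "LexG (Suc k) A f = (\<exists>B r g. ordered_alphabet B r \<and> LexG k (ext_alph A B) g
       \<and> (\<forall>u\<in>lists A. f u = maplex B r g u))"

definition base_alph :: "('a \<times> nat list) set" where
  "base_alph = {(a, []) | a. True}"

definition Lex :: "nat \<Rightarrow> ('a list \<Rightarrow> 'g list option) \<Rightarrow> bool" where
  "Lex k f \<longleftrightarrow> LexG k base_alph (\<lambda>w. f (map fst w))"

text \<open>Letters of \<Sigma> \<times> B (B = B_1 \<times> ... \<times> B_k) are encoded as (\<sigma>, [b_1,...,b_k]); the ordered
  alphabets are Bs i, rs i for i < k (0-based indexing).\<close>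

definition prod_alph :: "nat \<Rightarrow> (nat \<Rightarrow> nat set) \<Rightarrow> nat list set" where
  "prod_alph k Bs = {bs. length bs = k \<and> (\<forall>i<k. bs ! i \<in> Bs i)}"

definition sig_alph :: "nat \<Rightarrow> (nat \<Rightarrow> nat set) \<Rightarrow> ('a \<times> nat list) set" where
  "sig_alph k Bs = UNIV \<times> prod_alph k Bs"

definition comp_order :: "nat \<Rightarrow> (nat \<Rightarrow> nat \<Rightarrow> nat \<Rightarrow> bool) \<Rightarrow> nat list list \<Rightarrow> nat list list \<Rightarrow> bool" where
  "comp_order k rs x y \<longleftrightarrow> (\<exists>i<k. lexr (rs i) (map (\<lambda>l. l ! i) x) (map (\<lambda>l. l ! i) y)
       \<and> (\<forall>j<i. map (\<lambda>l. l ! j) x = map (\<lambda>l. l ! j) y))"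

definition is_lex_auto_transducer ::
  "nat \<Rightarrow> (nat \<Rightarrow> nat set) \<Rightarrow> (nat \<Rightarrow> nat \<Rightarrow> nat \<Rightarrow> bool) \<Rightarrow> 'a list set
     \<Rightarrow> ('a \<times> nat list) list set \<Rightarrow> ('g \<Rightarrow> ('a \<times> nat list) list set) \<Rightarrow> bool" where
  "is_lex_auto_transducer k Bs rs Ldom Luniv Lg \<longleftrightarrow>
     (\<forall>i<k. ordered_alphabet (Bs i) (rs i))
   \<and> regular_on (UNIV :: 'a set) Ldom
   \<and> regular_on (sig_alph k Bs) Luniv
   \<and> (\<forall>\<gamma>. regular_on (sig_alph k Bs) (Lg \<gamma>))
   \<and> (\<forall>u\<in>Ldom. \<forall>x\<in>words_of_len (prod_alph k Bs) (length u).
        zip u x \<in> Luniv \<longrightarrow> (\<exists>!\<gamma>. zip u x \<in> Lg \<gamma>))"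

definition lex_auto_output ::
  "nat \<Rightarrow> (nat \<Rightarrow> nat set) \<Rightarrow> (nat \<Rightarrow> nat \<Rightarrow> nat \<Rightarrow> bool) \<Rightarrow> 'a list set
     \<Rightarrow> ('a \<times> nat list) list set \<Rightarrow> ('g \<Rightarrow> ('a \<times> nat list) list set) \<Rightarrow> 'a list \<Rightarrow> 'g list option" where
  "lex_auto_output k Bs rs Ldom Luniv Lg u =
     (if u \<in> Ldom then
        Some (map (\<lambda>x. THE \<gamma>. zip u x \<in> Lg \<gamma>)
          (sorted_enum (comp_order k rs)
             {x \<in> words_of_len (prod_alph k Bs) (length u). zip u x \<in> Luniv}))
      else None)"

definition Lex_automatic :: "nat \<Rightarrow> ('a list \<Rightarrow> 'g list option) \<Rightarrow> bool" where
  "Lex_automatic k f \<longleftrightarrow> (\<exists>Bs rs Ldom Luniv Lg.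
      is_lex_auto_transducer k Bs rs Ldom Luniv Lg \<and> f = lex_auto_output k Bs rs Ldom Luniv Lg)"

end

theory Submission
  imports Defs "HOL-Library.Nat_Bijection"
begin


lemma nfa_reach_Nil[simp]: "nfa_reach d S [] = S" by (simp add: nfa_reach_def)
lemma nfa_reach_Cons[simp]: "nfa_reach d S (a#w) = nfa_reach d (\<Union>q\<in>S. d q a) w"
  by (simp add: nfa_reach_def)

lemma nfa_reach_sub: "is_nfa A Q I d F \<Longrightarrow> S \<subseteq> Q \<Longrightarrow> w \<in> lists A \<Longrightarrow> nfa_reach d S w \<subseteq> Q"
proof (induction w arbitrary: S)
  case (Cons a w)
  have "\<forall>q\<in>Q. d q a \<subseteq> Q" "a \<in> A" using Cons.prems unfolding is_nfa_def by auto
  then have "(\<Union>q\<in>S. d q a) \<subseteq> Q" using Cons.prems(2) by blast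
  then show ?case using Cons by simp
qed simp

lemma nfa_step_sub: "is_nfa A Q I d F \<Longrightarrow> S \<subseteq> Q \<Longrightarrow> a \<in> A \<Longrightarrow> (\<Union>q\<in>S. d q a) \<subseteq> Q"
  unfolding is_nfa_def by blast

lemma regular_sub: "regular_on A L \<Longrightarrow> L \<subseteq> lists A"
  by (auto simp: regular_on_def nfa_lang_def)

lemma regular_empty: "regular_on A {}"
  unfolding regular_on_def
  by (rule exI[of _ "{}"], rule exI[of _ "{}"], rule exI[of _ "\<lambda>_ _. {}"], rule exI[of _ "{}"])
     (auto simp: is_nfa_def nfa_lang_def)

lemma reach_empty_set[simp]: "nfa_reach d {} w = {}"
  by (induction w) auto

lemma regular_eps: "regular_on A {[]}"
  unfolding regular_on_def
  apply (rule exI[of _ "{0}"], rule exI[of _ "{0}"], rule exI[of _ "\<lambda>_ _. {}"], rule exI[of _ "{0}"])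
  apply (auto simp: is_nfa_def nfa_lang_def)
  subgoal for x by (cases x) auto
  done
text \<open>complement via subset construction\<close>
lemma regular_compl:
  assumes "regular_on A L" shows "regular_on A (lists A - L)"
proof -
  obtain Q I d F where N: "is_nfa A Q I d F" and L: "L = nfa_lang A Q I d F"
    using assms by (auto simp: regular_on_def)
  have fQ: "finite Q" using N by (simp add: is_nfa_def)
  define Q' where "Q' = set_encode ` Pow Q"
  define I' where "I' = {set_encode I}"
  define d' where "d' = (\<lambda>q a. {set_encode (\<Union>p\<in>set_decode q. d p a)})"
  define F' where "F' = set_encode ` {S. S \<subseteq> Q \<and> S \<inter> F = {}}"
  have fin: "\<And>S. S \<subseteq> Q \<Longrightarrow> finite S" using fQ finite_subset by blast
  have N': "is_nfa A Q' I' d' F'"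
    unfolding is_nfa_def Q'_def I'_def d'_def F'_def
  proof (intro conjI ballI)
    show "finite (set_encode ` Pow Q)" using fQ by simp
    show "{set_encode I} \<subseteq> set_encode ` Pow Q" using N by (auto simp: is_nfa_def)
    show "set_encode ` {S. S \<subseteq> Q \<and> S \<inter> F = {}} \<subseteq> set_encode ` Pow Q" by auto
    fix q a assume q: "q \<in> set_encode ` Pow Q" and a: "a \<in> A"
    then obtain S where S: "S \<subseteq> Q" "q = set_encode S" by auto
    then have "set_decode q = S" using fin by simp
    moreover have "(\<Union>p\<in>S. d p a) \<subseteq> Q" using nfa_step_sub[OF N S(1) a] .
    ultimately show "{set_encode (\<Union>p\<in>set_decode q. d p a)} \<subseteq> set_encode ` Pow Q" by auto
  qed
  have reach: "\<And>S. S \<subseteq> Q \<Longrightarrow> w \<in> lists A \<Longrightarrow> nfa_reach d' {set_encode S} w = {set_encode (nfa_reach d S w)}" for w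
  proof (induction w)
    case Nil then show ?case by simp
  next
    case (Cons a w)
    have "set_decode (set_encode S) = S" using Cons fin by simp
    moreover have "(\<Union>p\<in>S. d p a) \<subseteq> Q" using nfa_step_sub[OF N] Cons.prems by simp
    ultimately show ?case using Cons by (simp add: d'_def)
  qed
  have "lists A - L = nfa_lang A Q' I' d' F'"
  proof -
    { fix w assume w: "w \<in> lists A"
      have IQ: "I \<subseteq> Q" using N by (simp add: is_nfa_def)
      have RS: "nfa_reach d I w \<subseteq> Q" using nfa_reach_sub[OF N IQ w] .
      have "nfa_reach d' I' w \<inter> F' \<noteq> {} \<longleftrightarrow> nfa_reach d I w \<inter> F = {}"
        using reach[OF IQ w] RS fin unfolding I'_def F'_def
        by (auto simp: set_encode_eq)
    }
    then show ?thesis unfolding L nfa_lang_def by auto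
  qed
  then show ?thesis using N' unfolding regular_on_def by blast
qed



lemma regular_Int:
  assumes "regular_on A L1" "regular_on A L2" shows "regular_on A (L1 \<inter> L2)"
proof -
  obtain Q1 I1 d1 F1 where N1: "is_nfa A Q1 I1 d1 F1" and L1: "L1 = nfa_lang A Q1 I1 d1 F1"
    using assms(1) by (auto simp: regular_on_def)
  obtain Q2 I2 d2 F2 where N2: "is_nfa A Q2 I2 d2 F2" and L2: "L2 = nfa_lang A Q2 I2 d2 F2"
    using assms(2) by (auto simp: regular_on_def)
  define d where "d = (\<lambda>s a. prod_encode ` (d1 (fst (prod_decode s)) a \<times> d2 (snd (prod_decode s)) a))"
  have reach: "nfa_reach d (prod_encode ` (S1 \<times> S2)) w = prod_encode ` (nfa_reach d1 S1 w \<times> nfa_reach d2 S2 w)" for S1 S2 w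
  proof (induction w arbitrary: S1 S2)
    case (Cons a w)
    have "(\<Union>q\<in>prod_encode ` (S1 \<times> S2). d q a) = prod_encode ` ((\<Union>q\<in>S1. d1 q a) \<times> (\<Union>q\<in>S2. d2 q a))"
      unfolding d_def by (auto intro!: imageI)
    then show ?case using Cons by simp
  qed simp
  have N: "is_nfa A (prod_encode ` (Q1 \<times> Q2)) (prod_encode ` (I1 \<times> I2)) d (prod_encode ` (F1 \<times> F2))"
    unfolding is_nfa_def
  proof (intro conjI ballI)
    show "finite (prod_encode ` (Q1 \<times> Q2))" using N1 N2 by (simp add: is_nfa_def)
    show "prod_encode ` (I1 \<times> I2) \<subseteq> prod_encode ` (Q1 \<times> Q2)" using N1 N2
      by (intro image_mono Sigma_mono) (auto simp: is_nfa_def)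
    show "prod_encode ` (F1 \<times> F2) \<subseteq> prod_encode ` (Q1 \<times> Q2)" using N1 N2
      by (intro image_mono Sigma_mono) (auto simp: is_nfa_def)
    fix s a assume s: "s \<in> prod_encode ` (Q1 \<times> Q2)" and a: "a \<in> A"
    then obtain p q where pq: "p \<in> Q1" "q \<in> Q2" "s = prod_encode (p, q)" by auto
    have "d1 p a \<subseteq> Q1" "d2 q a \<subseteq> Q2" using N1 N2 pq a unfolding is_nfa_def by blast+
    then show "d s a \<subseteq> prod_encode ` (Q1 \<times> Q2)" unfolding d_def pq(3) by (simp add: image_mono Sigma_mono)
  qed
  have "L1 \<inter> L2 = nfa_lang A (prod_encode ` (Q1 \<times> Q2)) (prod_encode ` (I1 \<times> I2)) d (prod_encode ` (F1 \<times> F2))"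
    unfolding L1 L2 nfa_lang_def reach
    by (auto simp add: image_Int[OF inj_prod_encode, symmetric] Times_Int_Times)
  then show ?thesis using N unfolding regular_on_def by blast
qed

lemma regular_diff:
  assumes "regular_on A L1" "regular_on A L2" shows "regular_on A (L1 - L2)"
proof -
  have "L1 - L2 = L1 \<inter> (lists A - L2)" using regular_sub[OF assms(1)] by auto
  then show ?thesis using regular_Int[OF assms(1) regular_compl[OF assms(2)]] by simp
qed

lemma regular_Un:
  assumes "regular_on A L1" "regular_on A L2" shows "regular_on A (L1 \<union> L2)"
proof -
  have "L1 \<union> L2 = lists A - ((lists A - L1) \<inter> (lists A - L2))"
    using regular_sub[OF assms(1)] regular_sub[OF assms(2)] by auto
  then show ?thesis using regular_compl[OF regular_Int[OF regular_compl[OF assms(1)] regular_compl[OF assms(2)]]] by simp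
qed

lemma regular_UN:
  assumes "\<And>i. i < (n::nat) \<Longrightarrow> regular_on A (L i)" shows "regular_on A (\<Union>i<n. L i)"
  using assms
proof (induction n)
  case 0 then show ?case by (simp add: regular_empty)
next
  case (Suc n)
  have "(\<Union>i<Suc n. L i) = (\<Union>i<n. L i) \<union> L n" by (auto simp: lessThan_Suc)
  moreover have "regular_on A (\<Union>i<n. L i)" using Suc by simp
  moreover have "regular_on A (L n)" using Suc.prems by simp
  ultimately show ?case using regular_Un by simp
qed

lemma regular_UN_filter:
  assumes "\<And>i. i < (n::nat) \<Longrightarrow> regular_on A (L i)" shows "regular_on A (\<Union>i\<in>{i. i < n \<and> P i}. L i)"
proof -
  have e: "(\<Union>i\<in>{i. i < n \<and> P i}. L i) = (\<Union>i<n. if P i then L i else {})" by auto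
  have "regular_on A (\<Union>i<n. if P i then L i else {})"
    by (rule regular_UN) (simp add: assms regular_empty)
  then show ?thesis unfolding e .
qed

lemma regular_lists: "regular_on A (lists A)"
  using regular_compl[OF regular_empty[of A]] by simp

lemma regular_vimage:
  assumes "regular_on A L" "h ` A' \<subseteq> A" shows "regular_on A' {w \<in> lists A'. map h w \<in> L}"
proof -
  obtain Q I d F where N: "is_nfa A Q I d F" and L: "L = nfa_lang A Q I d F"
    using assms(1) by (auto simp: regular_on_def)
  define d' where "d' = (\<lambda>q a. d q (h a))"
  have reach: "nfa_reach d' S w = nfa_reach d S (map h w)" for S w
    by (induction w arbitrary: S) (simp_all add: d'_def)
  have N': "is_nfa A' Q I d' F" using N assms(2) unfolding is_nfa_def d'_def by blast
  have "{w \<in> lists A'. map h w \<in> L} = nfa_lang A' Q I d' F"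
    unfolding L nfa_lang_def reach using assms(2) by (auto simp: image_subset_iff)
  then show ?thesis using N' unfolding regular_on_def by blast
qed

lemma reach_UN: "nfa_reach d S w = (\<Union>q\<in>S. nfa_reach d {q} w)"
proof (induction w arbitrary: S)
  case (Cons a w)
  have "nfa_reach d S (a#w) = nfa_reach d (\<Union>q\<in>S. d q a) w" by simp
  also have "\<dots> = (\<Union>p\<in>(\<Union>q\<in>S. d q a). nfa_reach d {p} w)" by (rule Cons.IH)
  also have "\<dots> = (\<Union>q\<in>S. \<Union>p\<in>d q a. nfa_reach d {p} w)" by (rule UN_UN_flatten)
  also have "\<dots> = (\<Union>q\<in>S. nfa_reach d (d q a) w)" by (simp only: Cons.IH[of "d _ a"])
  also have "\<dots> = (\<Union>q\<in>S. nfa_reach d {q} (a#w))" by simp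
  finally show ?case .
qed simp

lemma reach_Union_gen: "nfa_reach d (\<Union>i\<in>K. S i) w = (\<Union>i\<in>K. nfa_reach d (S i) w)"
proof -
  have "nfa_reach d (\<Union>i\<in>K. S i) w = (\<Union>q\<in>(\<Union>i\<in>K. S i). nfa_reach d {q} w)" by (rule reach_UN)
  also have "\<dots> = (\<Union>i\<in>K. \<Union>q\<in>S i. nfa_reach d {q} w)" by (rule UN_UN_flatten)
  also have "\<dots> = (\<Union>i\<in>K. nfa_reach d (S i) w)" by (subst (2) reach_UN) (rule refl)
  finally show ?thesis .
qed

lemma W_Cons: "{w \<in> lists A'. map h w = a # v} = (\<Union>a'\<in>{a' \<in> A'. h a' = a}. (\<lambda>w. a' # w) ` {w \<in> lists A'. map h w = v})"
proof (rule set_eqI)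
  fix x show "x \<in> {w \<in> lists A'. map h w = a # v} \<longleftrightarrow> x \<in> (\<Union>a'\<in>{a' \<in> A'. h a' = a}. (\<lambda>w. a' # w) ` {w \<in> lists A'. map h w = v})"
    by (cases x) auto
qed

lemma regular_image:
  assumes "regular_on A' L" "h ` A' \<subseteq> A" shows "regular_on A (map h ` L)"
proof -
  obtain Q I d F where N: "is_nfa A' Q I d F" and L: "L = nfa_lang A' Q I d F"
    using assms(1) by (auto simp: regular_on_def)
  define d' where "d' = (\<lambda>q a. \<Union>a'\<in>{a' \<in> A'. h a' = a}. d q a')"
  define W where "W = (\<lambda>v. {w \<in> lists A'. map h w = v})"
  have reach: "nfa_reach d' S v = (\<Union>w\<in>W v. nfa_reach d S w)" for S v
  proof (induction v arbitrary: S)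
    case Nil then show ?case by (simp add: W_def)
  next
    case (Cons a v)
    let ?X = "{a' \<in> A'. h a' = a}"
    have "nfa_reach d' S (a#v) = (\<Union>w\<in>W v. nfa_reach d (\<Union>q\<in>S. \<Union>a'\<in>?X. d q a') w)"
      using Cons by (simp add: d'_def)
    also have "\<dots> = (\<Union>w\<in>W v. \<Union>q\<in>S. \<Union>a'\<in>?X. nfa_reach d (d q a') w)"
      by (simp only: reach_Union_gen)
    also have "\<dots> = (\<Union>a'\<in>?X. \<Union>w\<in>W v. \<Union>q\<in>S. nfa_reach d (d q a') w)"
      by (rule set_eqI) (simp, blast)
    also have "\<dots> = (\<Union>a'\<in>?X. \<Union>w\<in>W v. nfa_reach d S (a' # w))"
      by (simp only: nfa_reach_Cons reach_Union_gen)
    also have "\<dots> = (\<Union>w\<in>W (a#v). nfa_reach d S w)"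
      unfolding W_def W_Cons by (simp add: UN_UN_flatten)
    finally show ?case .
  qed
  have N': "is_nfa A Q I d' F" unfolding is_nfa_def
  proof (intro conjI ballI)
    show "finite Q" "I \<subseteq> Q" "F \<subseteq> Q" using N by (auto simp: is_nfa_def)
    fix q a assume "q \<in> Q" "a \<in> A"
    then have "\<forall>a'\<in>A'. d q a' \<subseteq> Q" using N unfolding is_nfa_def by blast
    then show "d' q a \<subseteq> Q" unfolding d'_def by blast
  qed
  have "map h ` L = nfa_lang A Q I d' F"
  proof -
    have sub: "map h ` L \<subseteq> lists A" using L assms(2) by (auto simp: nfa_lang_def image_subset_iff)
    show ?thesis
    proof (rule set_eqI)
      fix v
      show "v \<in> map h ` L \<longleftrightarrow> v \<in> nfa_lang A Q I d' F"
      proof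
        assume "v \<in> map h ` L"
        then obtain w where w: "w \<in> L" "v = map h w" by auto
        have "v \<in> lists A" using sub w by auto
        moreover have "w \<in> W v" using w L by (simp add: W_def nfa_lang_def)
        moreover have "nfa_reach d I w \<inter> F \<noteq> {}" using w L by (simp add: nfa_lang_def)
        ultimately show "v \<in> nfa_lang A Q I d' F" unfolding nfa_lang_def reach by blast
      next
        assume "v \<in> nfa_lang A Q I d' F"
        then obtain w where "w \<in> W v" "nfa_reach d I w \<inter> F \<noteq> {}" unfolding nfa_lang_def reach by blast
        then show "v \<in> map h ` L" unfolding W_def L nfa_lang_def by blast
      qed
    qed
  qed
  then show ?thesis using N' unfolding regular_on_def by blast
qed



definition strict_total :: "('x \<Rightarrow> 'x \<Rightarrow> bool) \<Rightarrow> 'x set \<Rightarrow> bool" where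
  "strict_total R V \<longleftrightarrow> (\<forall>x\<in>V. \<not> R x x) \<and> (\<forall>x\<in>V. \<forall>y\<in>V. \<forall>z\<in>V. R x y \<longrightarrow> R y z \<longrightarrow> R x z)
     \<and> (\<forall>x\<in>V. \<forall>y\<in>V. x \<noteq> y \<longrightarrow> R x y \<or> R y x)"

lemma strict_total_mono: "strict_total R V \<Longrightarrow> V' \<subseteq> V \<Longrightarrow> strict_total R V'"
  unfolding strict_total_def by blast

lemma sorted_unique:
  assumes "strict_total R V" "set xs = V" "sorted_wrt R xs" "set ys = V" "sorted_wrt R ys"
  shows "xs = ys"
  using assms
proof (induction xs arbitrary: ys V)
  case Nil then show ?case by simp
next
  case (Cons a xs)
  obtain b ys' where ys: "ys = b # ys'" using Cons.prems by (cases ys) auto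
  have irr: "\<forall>x\<in>V. \<not> R x x" and tr: "\<forall>x\<in>V. \<forall>y\<in>V. \<forall>z\<in>V. R x y \<longrightarrow> R y z \<longrightarrow> R x z"
    using Cons.prems(1) unfolding strict_total_def by blast+
  have aV: "a \<in> V" and bV: "b \<in> V" using Cons.prems ys by auto
  have ab: "a = b"
  proof (rule ccontr)
    assume "a \<noteq> b"
    then have "a \<in> set ys'" "b \<in> set xs" using Cons.prems ys by auto
    then have "R b a" "R a b" using Cons.prems ys by auto
    then show False using irr tr aV bV by blast
  qed
  have "a \<notin> set xs" using Cons.prems irr aV by auto
  moreover have "b \<notin> set ys'" using Cons.prems irr bV ys by auto
  ultimately have "set xs = V - {a}" "set ys' = V - {a}" using Cons.prems ys ab by auto
  moreover have "strict_total R (V - {a})" using Cons.prems(1) strict_total_mono by blast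
  ultimately have "xs = ys'"
    using Cons.prems ys by (intro Cons.IH[of "V - {a}" ys']) (simp_all)
  then show ?case using ab ys by simp
qed

lemma sorted_exists:
  assumes "finite V" "strict_total R V" shows "\<exists>xs. set xs = V \<and> sorted_wrt R xs"
  using assms
proof (induction V rule: finite_induct)
  case empty then show ?case by simp
next
  case (insert a V)
  have st: "strict_total R V" using insert.prems strict_total_mono by blast
  obtain xs where xs: "set xs = V" "sorted_wrt R xs" using insert.IH st by blast
  have irr: "\<forall>x\<in>insert a V. \<not> R x x" and tr: "\<forall>x\<in>insert a V. \<forall>y\<in>insert a V. \<forall>z\<in>insert a V. R x y \<longrightarrow> R y z \<longrightarrow> R x z"
    and tot: "\<forall>x\<in>insert a V. \<forall>y\<in>insert a V. x \<noteq> y \<longrightarrow> R x y \<or> R y x"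
    using insert.prems unfolding strict_total_def by blast+
  define ys where "ys = filter (\<lambda>y. R y a) xs @ a # filter (\<lambda>y. R a y) xs"
  have "set ys = insert a V"
  proof -
    have "\<forall>y\<in>V. R y a \<or> R a y" using tot insert.hyps(2) by auto
    then show ?thesis unfolding ys_def using xs(1) by auto
  qed
  moreover have "sorted_wrt R ys"
    unfolding ys_def sorted_wrt_append
  proof (intro conjI ballI)
    show "sorted_wrt R (filter (\<lambda>y. R y a) xs)" using xs(2) by (simp add: sorted_wrt_filter)
    have "sorted_wrt R (filter (\<lambda>y. R a y) xs)" using xs(2) by (simp add: sorted_wrt_filter)
    then show "sorted_wrt R (a # filter (\<lambda>y. R a y) xs)" by simp
    fix x y assume x: "x \<in> set (filter (\<lambda>y. R y a) xs)" and y: "y \<in> set (a # filter (\<lambda>y. R a y) xs)"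
    show "R x y"
    proof (cases "y = a")
      case True then show ?thesis using x by simp
    next
      case False
      then have "R a y" "y \<in> V" using y xs(1) by auto
      moreover have "R x a" "x \<in> V" using x xs(1) by auto
      ultimately show ?thesis using tr by blast
    qed
  qed
  ultimately show ?case by blast
qed

lemma sorted_enum_eq:
  assumes "strict_total R V" "set xs = V" "sorted_wrt R xs" shows "sorted_enum R V = xs"
  unfolding sorted_enum_def
  using assms sorted_unique by (intro the_equality) blast+

lemma sorted_enum_props:
  assumes "finite V" "strict_total R V"
  shows "set (sorted_enum R V) = V" "sorted_wrt R (sorted_enum R V)"
proof -
  obtain xs where "set xs = V" "sorted_wrt R xs" using sorted_exists[OF assms] by blast
  then have "sorted_enum R V = xs" using sorted_enum_eq assms(2) by blast
  then show "set (sorted_enum R V) = V" "sorted_wrt R (sorted_enum R V)"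
    using \<open>set xs = V\<close> \<open>sorted_wrt R xs\<close> by simp_all
qed

lemma sorted_wrt_concat_I:
  assumes "\<forall>xs\<in>set xss. sorted_wrt R xs" "sorted_wrt (\<lambda>xs ys. \<forall>x\<in>set xs. \<forall>y\<in>set ys. R x y) xss"
  shows "sorted_wrt R (concat xss)"
  using assms by (induction xss) (auto simp: sorted_wrt_append)



lemma words_of_len_mem: "x \<in> words_of_len B n \<longleftrightarrow> set x \<subseteq> B \<and> length x = n"
  by (auto simp: words_of_len_def)

lemma lexr_strict_total:
  assumes "ordered_alphabet B r" shows "strict_total (lexr r) (words_of_len B n)"
proof -
  have irr: "\<forall>x\<in>B. \<not> r x x" and tr: "\<forall>x\<in>B. \<forall>y\<in>B. \<forall>z\<in>B. r x y \<longrightarrow> r y z \<longrightarrow> r x z"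
    and tot: "\<forall>x\<in>B. \<forall>y\<in>B. x \<noteq> y \<longrightarrow> r x y \<or> r y x"
    using assms unfolding ordered_alphabet_def by blast+
  have mem: "x \<in> words_of_len B n \<Longrightarrow> i < n \<Longrightarrow> x ! i \<in> B" for x i
    by (auto simp: words_of_len_mem)
  show ?thesis unfolding strict_total_def
  proof (intro conjI ballI impI)
    fix x assume x: "x \<in> words_of_len B n"
    show "\<not> lexr r x x"
    proof
      assume "lexr r x x"
      then obtain i where "i < length x" "r (x!i) (x!i)" unfolding lexr_def by blast
      then show False using irr mem[OF x] x by (auto simp: words_of_len_mem)
    qed
  next
    fix x y z assume x: "x \<in> words_of_len B n" and y: "y \<in> words_of_len B n" and z: "z \<in> words_of_len B n"
      and xy: "lexr r x y" and yz: "lexr r y z"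
    have lens: "length x = n" "length y = n" "length z = n" using x y z by (auto simp: words_of_len_mem)
    obtain i where i: "i < n" "r (x!i) (y!i)" "\<forall>j. i < j \<and> j < n \<longrightarrow> x!j = y!j"
      using xy lens unfolding lexr_def by auto
    obtain j where j: "j < n" "r (y!j) (z!j)" "\<forall>l. j < l \<and> l < n \<longrightarrow> y!l = z!l"
      using yz lens unfolding lexr_def by auto
    have B: "x!i \<in> B" "y!i \<in> B" "z!i \<in> B" "x!j \<in> B" "y!j \<in> B" "z!j \<in> B"
      using mem x y z i j by auto
    consider "i < j" | "i = j" | "j < i" by linarith
    then show "lexr r x z"
    proof cases
      case 1
      then have "r (x!j) (z!j)" using i j by auto
      moreover have "\<forall>l. j < l \<and> l < n \<longrightarrow> x!l = z!l" using i j 1 by auto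
      ultimately show ?thesis unfolding lexr_def using lens j by auto
    next
      case 2
      then have "r (x!j) (z!j)" using i j tr B by blast
      moreover have "\<forall>l. j < l \<and> l < n \<longrightarrow> x!l = z!l" using i j 2 by auto
      ultimately show ?thesis unfolding lexr_def using lens j by auto
    next
      case 3
      then have "r (x!i) (z!i)" using i j by auto
      moreover have "\<forall>l. i < l \<and> l < n \<longrightarrow> x!l = z!l" using i j 3 by auto
      ultimately show ?thesis unfolding lexr_def using lens i by auto
    qed
  next
    fix x y assume x: "x \<in> words_of_len B n" and y: "y \<in> words_of_len B n" and ne: "x \<noteq> y"
    have lens: "length x = n" "length y = n" using x y by (auto simp: words_of_len_mem)
    define D where "D = {i. i < n \<and> x!i \<noteq> y!i}"
    have "D \<noteq> {}"
    proof
      assume "D = {}"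
      then have "x = y" using lens by (intro nth_equalityI) (auto simp: D_def)
      then show False using ne by simp
    qed
    moreover have fD: "finite D" unfolding D_def by simp
    ultimately have iD: "Max D \<in> D" by simp
    define i where "i = Max D"
    have i: "i < n" "x!i \<noteq> y!i" using iD unfolding i_def D_def by auto
    have above: "\<forall>j. i < j \<and> j < n \<longrightarrow> x!j = y!j"
    proof (intro allI impI)
      fix j assume "i < j \<and> j < n"
      moreover have "j \<in> D \<Longrightarrow> j \<le> i" unfolding i_def using fD by simp
      ultimately show "x!j = y!j" unfolding D_def by force
    qed
    have "r (x!i) (y!i) \<or> r (y!i) (x!i)" using tot mem[OF x i(1)] mem[OF y i(1)] i(2) by blast
    then show "lexr r x y \<or> lexr r y x"
      unfolding lexr_def using lens i(1) above by (metis)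
  qed
qed

definition col :: "nat \<Rightarrow> nat list list \<Rightarrow> nat list" where
  "col i z = map (\<lambda>l. l ! i) z"

lemma prod_alph_mem: "bs \<in> prod_alph k Bs \<longleftrightarrow> length bs = k \<and> (\<forall>i<k. bs ! i \<in> Bs i)"
  by (simp add: prod_alph_def)

lemma col_mem: "z \<in> words_of_len (prod_alph k Bs) n \<Longrightarrow> i < k \<Longrightarrow> col i z \<in> words_of_len (Bs i) n"
  by (auto simp: words_of_len_mem col_def prod_alph_mem)

lemma comp_order_col: "comp_order k rs x y \<longleftrightarrow> (\<exists>i<k. lexr (rs i) (col i x) (col i y) \<and> (\<forall>j<i. col j x = col j y))"
  by (simp add: comp_order_def col_def)

lemma comp_order_strict_total:
  assumes "\<forall>i<k. ordered_alphabet (Bs i) (rs i)"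
  shows "strict_total (comp_order k rs) (words_of_len (prod_alph k Bs) n)"
proof -
  let ?W = "words_of_len (prod_alph k Bs) n"
  have st: "i < k \<Longrightarrow> strict_total (lexr (rs i)) (words_of_len (Bs i) n)" for i
    using assms lexr_strict_total by blast
  show ?thesis unfolding strict_total_def comp_order_col
  proof (intro conjI ballI impI)
    fix x assume x: "x \<in> ?W"
    show "\<not> (\<exists>i<k. lexr (rs i) (col i x) (col i x) \<and> (\<forall>j<i. col j x = col j x))"
      using st col_mem[OF x] unfolding strict_total_def by blast
  next
    fix x y z assume x: "x \<in> ?W" and y: "y \<in> ?W" and z: "z \<in> ?W"
    assume "\<exists>i<k. lexr (rs i) (col i x) (col i y) \<and> (\<forall>j<i. col j x = col j y)"
    then obtain i where i: "i < k" "lexr (rs i) (col i x) (col i y)" "\<forall>j<i. col j x = col j y" by blast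
    assume "\<exists>i<k. lexr (rs i) (col i y) (col i z) \<and> (\<forall>j<i. col j y = col j z)"
    then obtain j where j: "j < k" "lexr (rs j) (col j y) (col j z)" "\<forall>l<j. col l y = col l z" by blast
    consider "i < j" | "i = j" | "j < i" by linarith
    then show "\<exists>i<k. lexr (rs i) (col i x) (col i z) \<and> (\<forall>j<i. col j x = col j z)"
    proof cases
      case 1
      then show ?thesis using i j by (intro exI[of _ i]) auto
    next
      case 2
      then have "lexr (rs i) (col i x) (col i z)"
        using st[OF i(1)] col_mem[OF x i(1)] col_mem[OF y i(1)] col_mem[OF z i(1)] i j
        unfolding strict_total_def by blast
      then show ?thesis using i j 2 by (intro exI[of _ i]) auto
    next
      case 3
      then show ?thesis using i j by (intro exI[of _ j]) auto
    qed
  next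
    fix x y assume x: "x \<in> ?W" and y: "y \<in> ?W" and ne: "x \<noteq> y"
    have ex: "\<exists>i<k. col i x \<noteq> col i y"
    proof (rule ccontr)
      assume "\<not> (\<exists>i<k. col i x \<noteq> col i y)"
      then have c: "\<forall>i<k. col i x = col i y" by blast
      have lx: "length x = n" "length y = n" using x y by (auto simp: words_of_len_mem)
      have "x = y"
      proof (rule nth_equalityI)
        show "length x = length y" using lx by simp
        fix p assume p: "p < length x"
        have "x!p \<in> prod_alph k Bs" "y!p \<in> prod_alph k Bs" using x y p lx
          by (auto simp: words_of_len_mem)
        then have "length (x!p) = k" "length (y!p) = k" by (auto simp: prod_alph_mem)
        moreover have "\<forall>i<k. x!p!i = y!p!i"
        proof (intro allI impI)
          fix i assume "i < k"
          then have "col i x ! p = col i y ! p" using c by simp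
          then show "x!p!i = y!p!i" using p lx by (simp add: col_def)
        qed
        ultimately show "x!p = y!p" by (intro nth_equalityI) auto
      qed
      then show False using ne by simp
    qed
    define i where "i = (LEAST i. i < k \<and> col i x \<noteq> col i y)"
    have i: "i < k" "col i x \<noteq> col i y" using LeastI_ex[OF ex] unfolding i_def by auto
    have below: "\<forall>j<i. col j x = col j y"
      using not_less_Least i(1) unfolding i_def by fastforce
    have "lexr (rs i) (col i x) (col i y) \<or> lexr (rs i) (col i y) (col i x)"
      using st[OF i(1)] col_mem[OF x i(1)] col_mem[OF y i(1)] i(2) unfolding strict_total_def by blast
    then show "(\<exists>i<k. lexr (rs i) (col i x) (col i y) \<and> (\<forall>j<i. col j x = col j y)) \<or>
               (\<exists>i<k. lexr (rs i) (col i y) (col i x) \<and> (\<forall>j<i. col j y = col j x))"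
      using i(1) below by metis
  qed
qed



definition cons_fn :: "'x \<Rightarrow> (nat \<Rightarrow> 'x) \<Rightarrow> nat \<Rightarrow> 'x" where
  "cons_fn b f i = (case i of 0 \<Rightarrow> b | Suc j \<Rightarrow> f j)"

lemma cons_fn_0[simp]: "cons_fn b f 0 = b" and cons_fn_Suc[simp]: "cons_fn b f (Suc i) = f i"
  by (simp_all add: cons_fn_def)

lemma cons_fn_split: "cons_fn (f 0) (\<lambda>i. f (Suc i)) = f"
  by (rule ext) (simp add: cons_fn_def split: nat.split)

definition extk :: "('a \<times> nat list) set \<Rightarrow> nat \<Rightarrow> (nat \<Rightarrow> nat set) \<Rightarrow> ('a \<times> nat list) set" where
  "extk A k Bs = {(a, bs @ c) | a bs c. (a, bs) \<in> A \<and> c \<in> prod_alph k Bs}"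

definition combk :: "('a \<times> nat list) list \<Rightarrow> nat list list \<Rightarrow> ('a \<times> nat list) list" where
  "combk u z = map (\<lambda>((a, bs), c). (a, bs @ c)) (zip u z)"

definition zc :: "nat list \<Rightarrow> nat list list \<Rightarrow> nat list list" where
  "zc x y = map (\<lambda>(b, c). b # c) (zip x y)"

lemma prod_alph_Suc: "prod_alph (Suc k) (cons_fn B Bs) = {b # c | b c. b \<in> B \<and> c \<in> prod_alph k Bs}"
proof (rule set_eqI)
  fix bs
  show "bs \<in> prod_alph (Suc k) (cons_fn B Bs) \<longleftrightarrow> bs \<in> {b # c | b c. b \<in> B \<and> c \<in> prod_alph k Bs}"
  proof (cases bs)
    case Nil then show ?thesis by (simp add: prod_alph_mem)
  next
    case (Cons b c)
    have "(\<forall>i<Suc k. (b # c) ! i \<in> cons_fn B Bs i) \<longleftrightarrow> b \<in> B \<and> (\<forall>i<k. c ! i \<in> Bs i)"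
      by (auto simp: All_less_Suc2)
    then show ?thesis using Cons by (auto simp: prod_alph_mem)
  qed
qed

lemma prod_alph_0: "prod_alph 0 Bs = {[]}"
  by (auto simp: prod_alph_mem)

lemma extk_Suc: "extk (ext_alph A B) k Bs = extk A (Suc k) (cons_fn B Bs)"
proof (rule set_eqI)
  fix p
  show "p \<in> extk (ext_alph A B) k Bs \<longleftrightarrow> p \<in> extk A (Suc k) (cons_fn B Bs)"
  proof
    assume "p \<in> extk (ext_alph A B) k Bs"
    then obtain a bs b c where p: "p = (a, (bs @ [b]) @ c)" "(a, bs) \<in> A" "b \<in> B" "c \<in> prod_alph k Bs"
      unfolding extk_def ext_alph_def by blast
    have "b # c \<in> prod_alph (Suc k) (cons_fn B Bs)" unfolding prod_alph_Suc using p by blast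
    then show "p \<in> extk A (Suc k) (cons_fn B Bs)" unfolding extk_def p(1)
      by (intro CollectI exI[of _ a] exI[of _ bs] exI[of _ "b # c"]) (simp add: p)
  next
    assume "p \<in> extk A (Suc k) (cons_fn B Bs)"
    then obtain a bs b c where p: "p = (a, bs @ (b # c))" "(a, bs) \<in> A" "b \<in> B" "c \<in> prod_alph k Bs"
      unfolding extk_def prod_alph_Suc by blast
    have "(a, bs @ [b]) \<in> ext_alph A B" unfolding ext_alph_def using p by blast
    then show "p \<in> extk (ext_alph A B) k Bs" unfolding extk_def p(1)
      by (intro CollectI exI[of _ a] exI[of _ "bs @ [b]"] exI[of _ c]) (simp add: p)
  qed
qed

lemma extk_0: "extk A 0 Bs = A"
  unfolding extk_def prod_alph_0 by auto

lemma combk_comb: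
  "length u = length x \<Longrightarrow> length x = length y \<Longrightarrow> combk (comb u x) y = combk u (zc x y)"
  by (induction u x y rule: list_induct3) (auto simp: combk_def comb_def zc_def)

lemma words_Suc:
  "words_of_len (prod_alph (Suc k) (cons_fn B Bs)) n =
     {zc x y | x y. x \<in> words_of_len B n \<and> y \<in> words_of_len (prod_alph k Bs) n}"
proof (rule set_eqI)
  fix z
  show "z \<in> words_of_len (prod_alph (Suc k) (cons_fn B Bs)) n \<longleftrightarrow>
     z \<in> {zc x y | x y. x \<in> words_of_len B n \<and> y \<in> words_of_len (prod_alph k Bs) n}"
  proof
    assume z: "z \<in> words_of_len (prod_alph (Suc k) (cons_fn B Bs)) n"
    have el: "\<forall>l\<in>set z. l \<noteq> [] \<and> hd l \<in> B \<and> tl l \<in> prod_alph k Bs"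
      using z unfolding words_of_len_mem prod_alph_Suc by auto
    have "z = zc (map hd z) (map tl z)"
      unfolding zc_def using el by (induction z) auto
    moreover have "map hd z \<in> words_of_len B n" "map tl z \<in> words_of_len (prod_alph k Bs) n"
      using z el by (auto simp: words_of_len_mem)
    ultimately show "z \<in> {zc x y | x y. x \<in> words_of_len B n \<and> y \<in> words_of_len (prod_alph k Bs) n}"
      by blast
  next
    assume "z \<in> {zc x y | x y. x \<in> words_of_len B n \<and> y \<in> words_of_len (prod_alph k Bs) n}"
    then obtain x y where z: "z = zc x y" and x: "x \<in> words_of_len B n" and y: "y \<in> words_of_len (prod_alph k Bs) n"
      by blast
    have "length x = n" "length y = n" using x y by (auto simp: words_of_len_mem)
    moreover have "x!i \<in> B" if "i < n" for i using x that by (metis words_of_len_mem nth_mem subsetD)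
    moreover have "y!i \<in> prod_alph k Bs" if "i < n" for i using y that by (metis words_of_len_mem nth_mem subsetD)
    ultimately show "z \<in> words_of_len (prod_alph (Suc k) (cons_fn B Bs)) n"
      using x y unfolding z zc_def words_of_len_mem prod_alph_Suc
      by (auto simp: set_zip)
  qed
qed

lemma col_zc_0: "length x = length y \<Longrightarrow> col 0 (zc x y) = x"
  by (induction x y rule: list_induct2) (auto simp: col_def zc_def)

lemma col_zc_Suc: "length x = length y \<Longrightarrow> col (Suc i) (zc x y) = col i y"
  by (induction x y rule: list_induct2) (auto simp: col_def zc_def)

lemma comp_order_Suc:
  assumes "length x = length y" "length x' = length y'"
  shows "comp_order (Suc k) (cons_fn r rs) (zc x y) (zc x' y') \<longleftrightarrow>
           lexr r x x' \<or> (x = x' \<and> comp_order k rs y y')"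
proof -
  have "comp_order (Suc k) (cons_fn r rs) (zc x y) (zc x' y') \<longleftrightarrow>
     (\<exists>i<Suc k. lexr (cons_fn r rs i) (col i (zc x y)) (col i (zc x' y')) \<and> (\<forall>j<i. col j (zc x y) = col j (zc x' y')))"
    by (rule comp_order_col)
  also have "\<dots> \<longleftrightarrow> lexr r x x' \<or> (\<exists>i<k. lexr (rs i) (col i y) (col i y') \<and> col 0 (zc x y) = col 0 (zc x' y') \<and> (\<forall>j<i. col j y = col j y'))"
    using assms by (simp add: Ex_less_Suc2 All_less_Suc2 col_zc_0 col_zc_Suc conj_assoc)
  also have "\<dots> \<longleftrightarrow> lexr r x x' \<or> (x = x' \<and> comp_order k rs y y')"
    using assms by (auto simp: col_zc_0 comp_order_col)
  finally show ?thesis .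
qed

lemma words_0: "words_of_len (prod_alph 0 Bs) n = {replicate n []}"
  by (auto simp: words_of_len_mem prod_alph_0 intro!: replicate_eqI)

lemma combk_replicate: "combk u (replicate (length u) []) = u"
  by (induction u) (auto simp: combk_def)



lemma finite_words: "finite B \<Longrightarrow> finite (words_of_len B n)"
  unfolding words_of_len_def using finite_lists_length_eq[of B n]
  by (simp add: lists_eq_set conj_commute)

lemma finite_prod_alph:
  assumes "\<forall>i<k. finite (Bs i)" shows "finite (prod_alph k Bs)"
proof -
  have "prod_alph k Bs \<subseteq> {bs. set bs \<subseteq> (\<Union>i<k. Bs i) \<and> length bs = k}"
  proof
    fix bs assume "bs \<in> prod_alph k Bs"
    then have "length bs = k" "\<forall>i<k. bs ! i \<in> Bs i" by (auto simp: prod_alph_mem)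
    then show "bs \<in> {bs. set bs \<subseteq> (\<Union>i<k. Bs i) \<and> length bs = k}"
      by (force simp: in_set_conv_nth)
  qed
  moreover have "finite {bs. set bs \<subseteq> (\<Union>i<k. Bs i) \<and> length bs = k}"
    using assms by (intro finite_lists_length_eq) auto
  ultimately show ?thesis by (rule finite_subset)
qed

lemma oa_finite: "ordered_alphabet B r \<Longrightarrow> finite B"
  by (simp add: ordered_alphabet_def)

lemma enum_split:
  assumes oa: "ordered_alphabet B r" and oas: "\<forall>i<k. ordered_alphabet (Bs i) (rs i)" and len: "length u = n"
  shows "sorted_enum (comp_order (Suc k) (cons_fn r rs))
            {z \<in> words_of_len (prod_alph (Suc k) (cons_fn B Bs)) n. combk u z \<in> Luniv}
       = concat (map (\<lambda>x. map (zc x) (sorted_enum (comp_order k rs)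
            {y \<in> words_of_len (prod_alph k Bs) n. combk (comb u x) y \<in> Luniv}))
           (sorted_enum (lexr r) (words_of_len B n)))"
    (is "sorted_enum ?R ?W = concat (map (\<lambda>x. map (zc x) (sorted_enum ?R' (?V x))) ?xs)")
proof -
  have oas': "\<forall>i<Suc k. ordered_alphabet (cons_fn B Bs i) (cons_fn r rs i)"
    using oa oas by (simp add: All_less_Suc2)
  have stR: "strict_total ?R (words_of_len (prod_alph (Suc k) (cons_fn B Bs)) n)"
    by (rule comp_order_strict_total[OF oas'])
  have stR': "strict_total ?R' (words_of_len (prod_alph k Bs) n)"
    by (rule comp_order_strict_total[OF oas])
  have stL: "strict_total (lexr r) (words_of_len B n)" by (rule lexr_strict_total[OF oa])
  have finB: "finite (words_of_len B n)" using oa by (simp add: oa_finite finite_words)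
  have finP: "finite (words_of_len (prod_alph k Bs) n)"
    using oas by (intro finite_words finite_prod_alph) (simp add: ordered_alphabet_def)
  have xs: "set ?xs = words_of_len B n" "sorted_wrt (lexr r) ?xs"
    using sorted_enum_props[OF finB stL] by auto
  have Vsub: "?V x \<subseteq> words_of_len (prod_alph k Bs) n" for x by auto
  have Ys: "set (sorted_enum ?R' (?V x)) = ?V x" "sorted_wrt ?R' (sorted_enum ?R' (?V x))" for x
    using sorted_enum_props[OF finite_subset[OF Vsub finP] strict_total_mono[OF stR' Vsub]] by auto
  have lenx: "x \<in> words_of_len B n \<Longrightarrow> length x = n" for x by (simp add: words_of_len_mem)
  have leny: "y \<in> ?V x \<Longrightarrow> length y = n" for x y by (simp add: words_of_len_mem)
  show ?thesis
  proof (rule sorted_enum_eq)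
    show "strict_total ?R ?W" by (rule strict_total_mono[OF stR]) auto
    show "set (concat (map (\<lambda>x. map (zc x) (sorted_enum ?R' (?V x))) ?xs)) = ?W"
    proof -
      have "set (concat (map (\<lambda>x. map (zc x) (sorted_enum ?R' (?V x))) ?xs)) =
             (\<Union>x\<in>words_of_len B n. zc x ` ?V x)" using xs Ys by simp
      also have "\<dots> = ?W"
      proof (rule set_eqI)
        fix z
        show "z \<in> (\<Union>x\<in>words_of_len B n. zc x ` ?V x) \<longleftrightarrow> z \<in> ?W"
        proof
          assume "z \<in> (\<Union>x\<in>words_of_len B n. zc x ` ?V x)"
          then obtain x y where x: "x \<in> words_of_len B n" and y: "y \<in> ?V x" and z: "z = zc x y" by blast
          have "combk u z = combk (comb u x) y" using combk_comb[of u x y] len lenx[OF x] leny[OF y] z by simp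
          moreover have "z \<in> words_of_len (prod_alph (Suc k) (cons_fn B Bs)) n"
            unfolding words_Suc using x y z by blast
          ultimately show "z \<in> ?W" using y by simp
        next
          assume z: "z \<in> ?W"
          then obtain x y where x: "x \<in> words_of_len B n" and y: "y \<in> words_of_len (prod_alph k Bs) n"
            and zz: "z = zc x y" unfolding words_Suc by blast
          have "combk u z = combk (comb u x) y" using combk_comb[of u x y] len lenx[OF x] y zz
            by (simp add: words_of_len_mem)
          then have "y \<in> ?V x" using z y by simp
          then show "z \<in> (\<Union>x\<in>words_of_len B n. zc x ` ?V x)" using x zz by blast
        qed
      qed
      finally show ?thesis .
    qed
    show "sorted_wrt ?R (concat (map (\<lambda>x. map (zc x) (sorted_enum ?R' (?V x))) ?xs))"
    proof (rule sorted_wrt_concat_I)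
      show "\<forall>ys\<in>set (map (\<lambda>x. map (zc x) (sorted_enum ?R' (?V x))) ?xs). sorted_wrt ?R ys"
      proof
        fix ys assume "ys \<in> set (map (\<lambda>x. map (zc x) (sorted_enum ?R' (?V x))) ?xs)"
        then obtain x where x: "x \<in> set ?xs" and ys: "ys = map (zc x) (sorted_enum ?R' (?V x))"
          by auto
        then have x: "x \<in> words_of_len B n" using xs(1) by simp
        have "sorted_wrt (\<lambda>a b. ?R (zc x a) (zc x b)) (sorted_enum ?R' (?V x))"
        proof (rule sorted_wrt_mono_rel[OF _ Ys(2)])
          fix a b assume "a \<in> set (sorted_enum ?R' (?V x))" "b \<in> set (sorted_enum ?R' (?V x))" "?R' a b"
          then have "length a = n" "length b = n" using leny Ys(1) by blast+
          then have "?R (zc x a) (zc x b) \<longleftrightarrow> lexr r x x \<or> (x = x \<and> ?R' a b)"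
            using lenx[OF x] by (intro comp_order_Suc) simp_all
          then show "?R (zc x a) (zc x b)" using \<open>?R' a b\<close> by blast
        qed
        then show "sorted_wrt ?R ys" unfolding ys by (simp add: sorted_wrt_map)
      qed
      show "sorted_wrt (\<lambda>as bs. \<forall>a\<in>set as. \<forall>b\<in>set bs. ?R a b) (map (\<lambda>x. map (zc x) (sorted_enum ?R' (?V x))) ?xs)"
        unfolding sorted_wrt_map
      proof (rule sorted_wrt_mono_rel[OF _ xs(2)])
        fix x x' assume x: "x \<in> set ?xs" and x': "x' \<in> set ?xs" and xx: "lexr r x x'"
        show "\<forall>a\<in>set (map (zc x) (sorted_enum ?R' (?V x))). \<forall>b\<in>set (map (zc x') (sorted_enum ?R' (?V x'))). ?R a b"
        proof (intro ballI)
          fix a b assume a: "a \<in> set (map (zc x) (sorted_enum ?R' (?V x)))" and b: "b \<in> set (map (zc x') (sorted_enum ?R' (?V x')))"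
          then obtain y y' where y: "y \<in> ?V x" "a = zc x y" and y': "y' \<in> ?V x'" "b = zc x' y'"
            using Ys(1) by auto
          have "length x = n" "length x' = n" using lenx x x' xs(1) by blast+
          moreover have "length y = n" "length y' = n" using leny[OF y(1)] leny[OF y'(1)] .
          ultimately have "?R (zc x y) (zc x' y') \<longleftrightarrow> lexr r x x' \<or> (x = x' \<and> ?R' y y')"
            by (intro comp_order_Suc) simp_all
          then show "?R a b" using xx y(2) y'(2) by blast
        qed
      qed
    qed
  qed
qed



definition gout :: "nat \<Rightarrow> (nat \<Rightarrow> nat set) \<Rightarrow> (nat \<Rightarrow> nat \<Rightarrow> nat \<Rightarrow> bool) \<Rightarrow> ('a \<times> nat list) list set
   \<Rightarrow> ('a \<times> nat list) list set \<Rightarrow> ('g \<Rightarrow> ('a \<times> nat list) list set) \<Rightarrow> ('a \<times> nat list) list \<Rightarrow> 'g list option" where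
  "gout k Bs rs Ldom Luniv Lg u = (if u \<in> Ldom then Some (map (\<lambda>z. THE \<gamma>. combk u z \<in> Lg \<gamma>)
      (sorted_enum (comp_order k rs) {z \<in> words_of_len (prod_alph k Bs) (length u). combk u z \<in> Luniv})) else None)"

definition GAdata :: "nat \<Rightarrow> ('a \<times> nat list) set \<Rightarrow> (nat \<Rightarrow> nat set) \<Rightarrow> (nat \<Rightarrow> nat \<Rightarrow> nat \<Rightarrow> bool) \<Rightarrow> ('a \<times> nat list) list set
   \<Rightarrow> ('a \<times> nat list) list set \<Rightarrow> ('g \<Rightarrow> ('a \<times> nat list) list set) \<Rightarrow> bool" where
  "GAdata k A Bs rs Ldom Luniv Lg \<longleftrightarrow> (\<forall>i<k. ordered_alphabet (Bs i) (rs i))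
     \<and> regular_on A Ldom \<and> regular_on (extk A k Bs) Luniv \<and> (\<forall>\<gamma>. regular_on (extk A k Bs) (Lg \<gamma>))
     \<and> (\<forall>u\<in>Ldom. \<forall>z\<in>words_of_len (prod_alph k Bs) (length u). combk u z \<in> Luniv \<longrightarrow> (\<exists>!\<gamma>. combk u z \<in> Lg \<gamma>))"

definition GA :: "nat \<Rightarrow> ('a \<times> nat list) set \<Rightarrow> (('a \<times> nat list) list \<Rightarrow> 'g list option) \<Rightarrow> bool" where
  "GA k A f \<longleftrightarrow> (\<exists>Bs rs Ldom Luniv Lg. GAdata k A Bs rs Ldom Luniv Lg \<and> (\<forall>u\<in>lists A. f u = gout k Bs rs Ldom Luniv Lg u))"

definition hproj :: "'a \<times> nat list \<Rightarrow> 'a \<times> nat list" where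
  "hproj p = (fst p, butlast (snd p))"

lemma length_comb[simp]: "length (comb u x) = min (length u) (length x)"
  by (simp add: comb_def)

lemma comb_lists: "u \<in> lists A \<Longrightarrow> x \<in> words_of_len B (length u) \<Longrightarrow> comb u x \<in> lists (ext_alph A B)"
  unfolding comb_def words_of_len_mem ext_alph_def
  by (auto simp: set_zip) (metis (no_types, lifting) in_set_conv_nth nth_mem subsetD prod.collapse)

lemma map_hproj_comb: "length u = length x \<Longrightarrow> map hproj (comb u x) = u"
  by (induction u x rule: list_induct2) (auto simp: comb_def hproj_def)

lemma hproj_ext: "hproj ` ext_alph A B \<subseteq> A"
  by (auto simp: hproj_def ext_alph_def)

lemma comb_decomp:
  assumes "w \<in> lists (ext_alph A B)"
  shows "comb (map hproj w) (map (\<lambda>p. last (snd p)) w) = w"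
    and "map (\<lambda>p. last (snd p)) w \<in> words_of_len B (length w)"
    and "map hproj w \<in> lists A"
proof -
  have el: "\<forall>p\<in>set w. \<exists>a bs b. p = (a, bs @ [b]) \<and> (a, bs) \<in> A \<and> b \<in> B"
    using assms by (auto simp: ext_alph_def)
  then show "comb (map hproj w) (map (\<lambda>p. last (snd p)) w) = w"
    by (induction w) (auto simp: comb_def hproj_def)
  show "map (\<lambda>p. last (snd p)) w \<in> words_of_len B (length w)"
    using el by (auto simp: words_of_len_mem)
  show "map hproj w \<in> lists A"
    using el by (auto simp: hproj_def) (metis butlast_snoc prod.inject)
qed

lemma sorted_enum_words_set:
  "ordered_alphabet B r \<Longrightarrow> set (sorted_enum (lexr r) (words_of_len B n)) = words_of_len B n"
  using sorted_enum_props(1)[OF finite_words[OF oa_finite] lexr_strict_total] by blast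

lemma maplex_None:
  assumes "ordered_alphabet B r" "x \<in> words_of_len B (length u)" "g (comb u x) = None"
  shows "maplex B r g u = None"
  using assms sorted_enum_words_set[OF assms(1)] unfolding maplex_def Let_def by auto

lemma maplex_gout:
  assumes oa: "ordered_alphabet B r" and oas: "\<forall>i<k. ordered_alphabet (Bs i) (rs i)"
    and g: "\<forall>x\<in>words_of_len B (length u). g (comb u x) = gout k Bs rs Ld' Luniv Lg (comb u x) \<and> comb u x \<in> Ld'"
  shows "maplex B r g u = Some (map (\<lambda>z. THE \<gamma>. combk u z \<in> Lg \<gamma>)
     (sorted_enum (comp_order (Suc k) (cons_fn r rs)) {z \<in> words_of_len (prod_alph (Suc k) (cons_fn B Bs)) (length u). combk u z \<in> Luniv}))"
proof -
  define n where "n = length u"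
  define xs where "xs = sorted_enum (lexr r) (words_of_len B n)"
  define V where "V = (\<lambda>x. {y \<in> words_of_len (prod_alph k Bs) n. combk (comb u x) y \<in> Luniv})"
  define Ys where "Ys = (\<lambda>x. sorted_enum (comp_order k rs) (V x))"
  have sxs: "set xs = words_of_len B n" unfolding xs_def by (rule sorted_enum_words_set[OF oa])
  have lenx: "x \<in> words_of_len B n \<Longrightarrow> length x = n" for x by (simp add: words_of_len_mem)
  have gx: "x \<in> set xs \<Longrightarrow> g (comb u x) = Some (map (\<lambda>y. THE \<gamma>. combk (comb u x) y \<in> Lg \<gamma>) (Ys x))" for x
    using g sxs lenx unfolding Ys_def V_def gout_def n_def by auto
  have finP: "finite (words_of_len (prod_alph k Bs) n)"
    using oas by (intro finite_words finite_prod_alph) (simp add: ordered_alphabet_def)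
  have stR': "strict_total (comp_order k rs) (words_of_len (prod_alph k Bs) n)"
    by (rule comp_order_strict_total[OF oas])
  have Vsub: "V x \<subseteq> words_of_len (prod_alph k Bs) n" for x unfolding V_def by auto
  have sYs: "set (Ys x) = V x" for x
    unfolding Ys_def using sorted_enum_props(1)[OF finite_subset[OF Vsub finP] strict_total_mono[OF stR' Vsub]] .
  have "maplex B r g u = Some (concat (map (\<lambda>x. the (g (comb u x))) xs))"
    unfolding maplex_def Let_def n_def[symmetric] xs_def[symmetric] using gx by auto
  also have "concat (map (\<lambda>x. the (g (comb u x))) xs) = concat (map (\<lambda>x. map (\<lambda>y. THE \<gamma>. combk (comb u x) y \<in> Lg \<gamma>) (Ys x)) xs)"
    using gx by (intro arg_cong[where f=concat] map_cong) auto
  also have "\<dots> = concat (map (\<lambda>x. map (\<lambda>z. THE \<gamma>. combk u z \<in> Lg \<gamma>) (map (zc x) (Ys x))) xs)"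
  proof (rule arg_cong[where f=concat], rule map_cong[OF refl])
    fix x assume x: "x \<in> set xs"
    show "map (\<lambda>y. THE \<gamma>. combk (comb u x) y \<in> Lg \<gamma>) (Ys x) = map (\<lambda>z. THE \<gamma>. combk u z \<in> Lg \<gamma>) (map (zc x) (Ys x))"
    proof -
      have "y \<in> set (Ys x) \<Longrightarrow> combk (comb u x) y = combk u (zc x y)" for y
        using combk_comb[of u x y] x sxs lenx sYs unfolding V_def n_def by (auto simp: words_of_len_mem)
      then show ?thesis by simp
    qed
  qed
  also have "\<dots> = map (\<lambda>z. THE \<gamma>. combk u z \<in> Lg \<gamma>) (concat (map (\<lambda>x. map (zc x) (Ys x)) xs))"
    by (simp add: map_concat comp_def)
  also have "concat (map (\<lambda>x. map (zc x) (Ys x)) xs) = sorted_enum (comp_order (Suc k) (cons_fn r rs)) {z \<in> words_of_len (prod_alph (Suc k) (cons_fn B Bs)) (length u). combk u z \<in> Luniv}"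
    unfolding Ys_def V_def xs_def n_def using enum_split[OF oa oas refl, where Luniv = Luniv] by simp
  finally show ?thesis .
qed



lemma strict_total_empty: "strict_total R {}" by (simp add: strict_total_def)
lemma strict_total_single: "\<not> R a a \<Longrightarrow> strict_total R {a}" by (simp add: strict_total_def)

lemma sorted_enum_empty: "sorted_enum R {} = []"
  by (rule sorted_enum_eq[OF strict_total_empty]) simp_all

lemma sorted_enum_single: "\<not> R a a \<Longrightarrow> sorted_enum R {a} = [a]"
  by (rule sorted_enum_eq[OF strict_total_single]) simp_all

lemma comp_order_0[simp]: "\<not> comp_order 0 rs x y" by (simp add: comp_order_def)

lemma gout_0: "gout 0 Bs rs Ldom Luniv Lg u =
   (if u \<in> Ldom then Some (if u \<in> Luniv then [THE \<gamma>. u \<in> Lg \<gamma>] else []) else None)"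
proof -
  have "{z \<in> words_of_len (prod_alph 0 Bs) (length u). combk u z \<in> Luniv} =
        (if u \<in> Luniv then {replicate (length u) []} else {})"
    unfolding words_0 using combk_replicate[of u] by auto
  then show ?thesis unfolding gout_def
    by (simp add: sorted_enum_empty sorted_enum_single combk_replicate)
qed

lemma GAdata_0_unique: "GAdata 0 A Bs rs Ldom Luniv Lg \<Longrightarrow> u \<in> Ldom \<Longrightarrow> u \<in> Luniv \<Longrightarrow> \<exists>!\<gamma>. u \<in> Lg \<gamma>"
  unfolding GAdata_def words_0 using combk_replicate[of u] by force

lemma len1: "length (w::'x list) \<le> 1 \<Longrightarrow> w \<noteq> [] \<Longrightarrow> w = [hd w]"
  by (cases w) auto

lemma simple_to_GA:
  assumes "simple_trans A f" shows "GA 0 A f"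
proof -
  obtain n L w where H: "(\<forall>i<(n::nat). regular_on A (L i) \<and> length (w i) \<le> 1)
    \<and> (\<forall>i<n. \<forall>j<n. i \<noteq> j \<longrightarrow> L i \<inter> L j = {})
    \<and> (\<forall>i<n. \<forall>u\<in>L i. f u = Some (w i))
    \<and> (\<forall>u\<in>lists A. (\<forall>i<n. u \<notin> L i) \<longrightarrow> f u = None)"
    using assms unfolding simple_trans_def by (elim exE) (rule that, assumption)
  note H' = H[THEN conjunct1] H[THEN conjunct2, THEN conjunct1] H[THEN conjunct2, THEN conjunct2, THEN conjunct1]
     H[THEN conjunct2, THEN conjunct2, THEN conjunct2]
  note reg = H'(1) and disj = H'(2) and val = H'(3) and none = H'(4)
  define Ldom where "Ldom = (\<Union>i\<in>{i. i < n \<and> True}. L i)"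
  define Luniv where "Luniv = (\<Union>i\<in>{i. i < n \<and> w i \<noteq> []}. L i)"
  define Lg where "Lg = (\<lambda>\<gamma>. \<Union>i\<in>{i. i < n \<and> w i = [\<gamma>]}. L i)"
  define Bs :: "nat \<Rightarrow> nat set" where "Bs = (\<lambda>_. {})"
  define rs :: "nat \<Rightarrow> nat \<Rightarrow> nat \<Rightarrow> bool" where "rs = (\<lambda>_ _ _. False)"
  have regL: "\<And>i. i < n \<Longrightarrow> regular_on A (L i)" using reg by blast
  have same: "i < n \<Longrightarrow> j < n \<Longrightarrow> u \<in> L i \<Longrightarrow> u \<in> L j \<Longrightarrow> i = j" for i j u
    using disj by blast
  have uniq: "u \<in> L i \<Longrightarrow> i < n \<Longrightarrow> w i = [\<gamma>] \<Longrightarrow> (\<exists>!\<gamma>. u \<in> Lg \<gamma>) \<and> (THE \<gamma>. u \<in> Lg \<gamma>) = \<gamma>" for u i \<gamma>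
  proof -
    assume u: "u \<in> L i" "i < n" "w i = [\<gamma>]"
    have ex: "u \<in> Lg \<gamma>" unfolding Lg_def using u by blast
    have un: "u \<in> Lg \<gamma>' \<Longrightarrow> \<gamma>' = \<gamma>" for \<gamma>'
    proof -
      assume "u \<in> Lg \<gamma>'"
      then obtain j where "j < n" "w j = [\<gamma>']" "u \<in> L j" unfolding Lg_def by blast
      then show "\<gamma>' = \<gamma>" using same[of i j u] u by simp
    qed
    have "\<exists>!\<gamma>. u \<in> Lg \<gamma>" using ex un by (intro ex1I[of _ \<gamma>])
    moreover have "(THE \<gamma>. u \<in> Lg \<gamma>) = \<gamma>" using ex un by (rule the_equality)
    ultimately show ?thesis by (rule conjI)
  qed
  have D: "GAdata 0 A Bs rs Ldom Luniv Lg"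
    unfolding GAdata_def extk_0
  proof (intro conjI allI ballI impI)
    show "regular_on A Ldom" unfolding Ldom_def by (rule regular_UN_filter[OF regL])
    show "regular_on A Luniv" unfolding Luniv_def by (rule regular_UN_filter[OF regL])
    fix \<gamma> show "regular_on A (Lg \<gamma>)" unfolding Lg_def by (rule regular_UN_filter[OF regL])
  next
    fix u z assume "u \<in> Ldom" and z: "z \<in> words_of_len (prod_alph 0 Bs) (length u)" and uz: "combk u z \<in> Luniv"
    have "combk u z = u" using z combk_replicate[of u] by (simp add: words_0)
    then obtain i where i: "i < n" "w i \<noteq> []" "u \<in> L i" using uz unfolding Luniv_def by auto
    then have "w i = [hd (w i)]" using reg i(1) by (intro len1) auto
    then have "\<exists>!\<gamma>. u \<in> Lg \<gamma>" using uniq[OF i(3) i(1)] by blast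
    then show "\<exists>!\<gamma>. combk u z \<in> Lg \<gamma>" using \<open>combk u z = u\<close> by simp
  qed simp
  have agree: "f u = gout 0 Bs rs Ldom Luniv Lg u" if u: "u \<in> lists A" for u
  proof (cases "\<exists>i<n. u \<in> L i")
    case True
    then obtain i where i: "i < n" "u \<in> L i" by blast
    have fu: "f u = Some (w i)" using val i by blast
    have dom: "u \<in> Ldom" unfolding Ldom_def using i by blast
    show ?thesis
    proof (cases "w i = []")
      case True
      have "u \<notin> Luniv"
      proof
        assume "u \<in> Luniv"
        then obtain j where "j < n" "w j \<noteq> []" "u \<in> L j" unfolding Luniv_def by blast
        then show False using same[of i j u] i True by simp
      qed
      then show ?thesis using fu dom True by (simp add: gout_0)
    next
      case False
      then have wi: "w i = [hd (w i)]" using reg i(1) by (intro len1) auto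
      have "u \<in> Luniv" unfolding Luniv_def using i False by blast
      moreover have "(THE \<gamma>. u \<in> Lg \<gamma>) = hd (w i)" using uniq[OF i(2) i(1) wi] by blast
      ultimately show ?thesis using fu dom wi by (simp add: gout_0)
    qed
  next
    case False
    then have "f u = None" using none u by blast
    moreover have "u \<notin> Ldom" unfolding Ldom_def using False by blast
    ultimately show ?thesis by (simp add: gout_0)
  qed
  show ?thesis unfolding GA_def
    by (rule exI[of _ Bs], rule exI[of _ rs], rule exI[of _ Ldom], rule exI[of _ Luniv], rule exI[of _ Lg])
       (intro conjI D ballI agree)
qed

lemma GA_to_simple:
  fixes f :: "('a \<times> nat list) list \<Rightarrow> 'g::finite list option"
  assumes "GA 0 A f" shows "simple_trans A f"
proof -
  obtain Bs rs Ldom Luniv Lg where D: "GAdata 0 A Bs rs Ldom Luniv Lg"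
    and agree: "\<forall>u\<in>lists A. f u = gout 0 Bs rs Ldom Luniv Lg u"
    using assms unfolding GA_def by iprover
  obtain gs :: "'g list" where gs: "set gs = UNIV" "distinct gs"
    using finite_distinct_list[OF finite_UNIV] by blast
  define m where "m = length gs"
  define L where "L = (\<lambda>i. if i < m then Ldom \<inter> Luniv \<inter> Lg (gs ! i) else Ldom - Luniv)"
  define w where "w = (\<lambda>i. if i < m then [gs ! i] else ([] :: 'g list))"
  have rD: "regular_on A Ldom" and rU: "regular_on A Luniv" and rG: "\<And>\<gamma>. regular_on A (Lg \<gamma>)"
    using D unfolding GAdata_def extk_0 by blast+
  have un: "u \<in> Ldom \<Longrightarrow> u \<in> Luniv \<Longrightarrow> \<exists>!\<gamma>. u \<in> Lg \<gamma>" for u by (rule GAdata_0_unique[OF D])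
  have domsub: "Ldom \<subseteq> lists A" by (rule regular_sub[OF rD])
  have P1: "\<forall>i<Suc m. regular_on A (L i) \<and> length (w i) \<le> 1"
    unfolding L_def w_def using rD rU rG by (auto intro: regular_Int regular_diff)
  have P2: "\<forall>i<Suc m. \<forall>j<Suc m. i \<noteq> j \<longrightarrow> L i \<inter> L j = {}"
  proof (intro allI impI)
    fix i j assume ij: "i < Suc m" "j < Suc m" "i \<noteq> j"
    show "L i \<inter> L j = {}"
    proof (cases "i < m \<and> j < m")
      case True
      have ne: "gs ! i \<noteq> gs ! j" using nth_eq_iff_index_eq[OF gs(2)] True ij(3) unfolding m_def by simp
      have "u \<notin> L i \<inter> L j" for u
      proof
        assume "u \<in> L i \<inter> L j"
        then have "u \<in> Ldom" "u \<in> Luniv" "u \<in> Lg (gs ! i)" "u \<in> Lg (gs ! j)" using True unfolding L_def by auto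
        then show False using un[of u] ne by blast
      qed
      then show ?thesis by blast
    next
      case False
      then show ?thesis using ij unfolding L_def by auto
    qed
  qed
  have P3: "\<forall>i<Suc m. \<forall>u\<in>L i. f u = Some (w i)"
  proof (intro allI impI ballI)
    fix i u assume i: "i < Suc m" and u: "u \<in> L i"
    have uA: "u \<in> lists A" using u domsub unfolding L_def by (auto split: if_splits)
    show "f u = Some (w i)"
    proof (cases "i < m")
      case True
      then have "u \<in> Ldom" "u \<in> Luniv" "u \<in> Lg (gs ! i)" using u unfolding L_def by auto
      moreover then have "(THE \<gamma>. u \<in> Lg \<gamma>) = gs ! i" using the1_equality[OF un] by blast
      ultimately show ?thesis using agree uA True unfolding w_def by (simp add: gout_0)
    next
      case False
      then show ?thesis using u agree uA unfolding L_def w_def by (simp add: gout_0)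
    qed
  qed
  have P4: "\<forall>u\<in>lists A. (\<forall>i<Suc m. u \<notin> L i) \<longrightarrow> f u = None"
  proof (intro ballI impI)
    fix u assume uA: "u \<in> lists A" and nL: "\<forall>i<Suc m. u \<notin> L i"
    have "u \<notin> Ldom"
    proof
      assume d: "u \<in> Ldom"
      show False
      proof (cases "u \<in> Luniv")
        case True
        then obtain \<gamma> where g: "u \<in> Lg \<gamma>" using un d by blast
        obtain i where "i < m" "gs ! i = \<gamma>" using gs(1) unfolding m_def by (metis UNIV_I in_set_conv_nth)
        then show False using nL d True g unfolding L_def by (metis less_SucI IntI)
      next
        case False
        then show False using nL d unfolding L_def by (metis DiffI lessI less_irrefl)
      qed
    qed
    then show "f u = None" using agree uA by (simp add: gout_0)
  qed
  show ?thesis unfolding simple_trans_def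
    by (rule exI[of _ "Suc m"], rule exI[of _ L], rule exI[of _ w]) (intro conjI P1 P2 P3 P4)
qed

lemma base_case:
  fixes f :: "('a \<times> nat list) list \<Rightarrow> 'g::finite list option"
  shows "LexG 0 A f \<longleftrightarrow> GA 0 A f"
  using simple_to_GA GA_to_simple by auto



lemma oa_single: "ordered_alphabet {0} (\<lambda>_ _. False)"
  by (simp add: ordered_alphabet_def)

lemma lists_empty_set: "lists {} = {[]}"
proof (rule set_eqI)
  fix x :: "'x list" show "x \<in> lists {} \<longleftrightarrow> x \<in> {[]}" by (cases x) auto
qed

lemma regular_sub_eps: "L \<subseteq> {[]} \<Longrightarrow> regular_on A L"
proof -
  assume "L \<subseteq> {[]}"
  then have "L = {} \<or> L = {[]}" by blast
  then show ?thesis using regular_empty regular_eps by metis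
qed

lemma length_combk[simp]: "length (combk u z) = min (length u) (length z)"
  by (simp add: combk_def)

lemma words_0_len: "words_of_len B 0 = {[]}"
  by (auto simp: words_of_len_mem)

lemma lexr_Nil: "\<not> lexr r [] []" by (simp add: lexr_def)

lemma comp_order_Nil: "\<not> comp_order k rs [] []"
  by (simp add: comp_order_def lexr_Nil)

lemma W_degenerate:
  assumes "Luniv \<subseteq> {[]}"
  shows "{z \<in> words_of_len (prod_alph k Bs) (length u). combk u z \<in> Luniv} =
         (if u = [] \<and> [] \<in> Luniv then {[]} else {})"
proof (rule set_eqI)
  fix z
  show "z \<in> {z \<in> words_of_len (prod_alph k Bs) (length u). combk u z \<in> Luniv} \<longleftrightarrow>
        z \<in> (if u = [] \<and> [] \<in> Luniv then {[]} else {})"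
  proof
    assume z: "z \<in> {z \<in> words_of_len (prod_alph k Bs) (length u). combk u z \<in> Luniv}"
    then have "combk u z = []" using assms by blast
    moreover have "length z = length u" using z by (simp add: words_of_len_mem)
    ultimately have "length u = 0" by (metis length_combk list.size(3) min.idem)
    then have "u = []" "z = []" using \<open>length z = length u\<close> by auto
    then show "z \<in> (if u = [] \<and> [] \<in> Luniv then {[]} else {})" using z by (simp add: combk_def)
  next
    assume "z \<in> (if u = [] \<and> [] \<in> Luniv then {[]} else {})"
    then show "z \<in> {z \<in> words_of_len (prod_alph k Bs) (length u). combk u z \<in> Luniv}"
      by (auto split: if_splits simp: words_0_len combk_def)
  qed
qed

lemma gout_degenerate:
  assumes "Luniv \<subseteq> {[]}"
  shows "gout k Bs rs Ldom Luniv Lg u = gout k' Bs' rs' Ldom Luniv Lg u"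
  unfolding gout_def W_degenerate[OF assms]
  by (simp add: sorted_enum_empty sorted_enum_single comp_order_Nil)

lemma degenerate:
  assumes D: "GAdata (Suc k) A Bs rs Ldom Luniv Lg" and e: "Bs 0 = {}"
  shows "GAdata (Suc k) A (\<lambda>_. {0}) (\<lambda>_ _ _. False) Ldom Luniv Lg"
    and "gout (Suc k) Bs rs Ldom Luniv Lg u = gout (Suc k) (\<lambda>_. {0}) (\<lambda>_ _ _. False) Ldom Luniv Lg u"
proof -
  have pe: "prod_alph (Suc k) Bs = {}"
  proof -
    have "bs \<notin> prod_alph (Suc k) Bs" for bs
    proof
      assume "bs \<in> prod_alph (Suc k) Bs"
      then have "bs ! 0 \<in> Bs 0" by (simp add: prod_alph_mem)
      then show False using e by simp
    qed
    then show ?thesis by blast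
  qed
  have ee: "extk A (Suc k) Bs = {}" unfolding extk_def pe by simp
  have rU: "regular_on {} Luniv" and rG: "\<And>\<gamma>. regular_on {} (Lg \<gamma>)"
    using D unfolding GAdata_def ee by blast+
  have U: "Luniv \<subseteq> {[]}" using regular_sub[OF rU] lists_empty_set by simp
  have G: "\<And>\<gamma>. Lg \<gamma> \<subseteq> {[]}" using regular_sub[OF rG] lists_empty_set by simp
  show "gout (Suc k) Bs rs Ldom Luniv Lg u = gout (Suc k) (\<lambda>_. {0}) (\<lambda>_ _ _. False) Ldom Luniv Lg u"
    by (rule gout_degenerate[OF U])
  have uq: "\<forall>u\<in>Ldom. \<forall>z\<in>words_of_len (prod_alph (Suc k) Bs) (length u). combk u z \<in> Luniv \<longrightarrow> (\<exists>!\<gamma>. combk u z \<in> Lg \<gamma>)"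
    using D unfolding GAdata_def by blast
  show "GAdata (Suc k) A (\<lambda>_. {0}) (\<lambda>_ _ _. False) Ldom Luniv Lg"
    unfolding GAdata_def
  proof (intro conjI allI ballI impI)
    show "regular_on A Ldom" using D unfolding GAdata_def by blast
    show "regular_on (extk A (Suc k) (\<lambda>_. {0})) Luniv" by (rule regular_sub_eps[OF U])
    fix \<gamma> show "regular_on (extk A (Suc k) (\<lambda>_. {0})) (Lg \<gamma>)" by (rule regular_sub_eps[OF G])
  next
    fix i show "ordered_alphabet {0} (\<lambda>_ _. False)" by (rule oa_single)
  next
    fix u z assume u: "u \<in> Ldom" and z: "z \<in> words_of_len (prod_alph (Suc k) (\<lambda>_. {0})) (length u)"
      and uz: "combk u z \<in> Luniv"
    have "z \<in> {z \<in> words_of_len (prod_alph (Suc k) (\<lambda>_. {0})) (length u). combk u z \<in> Luniv}" using z uz by simp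
    then have "u = []" "z = []" "[] \<in> Luniv" unfolding W_degenerate[OF U] by (auto split: if_splits)
    moreover have "[] \<in> words_of_len (prod_alph (Suc k) Bs) 0" by (simp add: words_0_len)
    ultimately show "\<exists>!\<gamma>. combk u z \<in> Lg \<gamma>" using uq u uz by auto
  qed
qed

lemma Ldom_regular:
  assumes "regular_on (ext_alph A B) Ld'"
  shows "regular_on A {u \<in> lists A. \<forall>x\<in>words_of_len B (length u). comb u x \<in> Ld'}"
proof -
  let ?M = "map hproj ` (lists (ext_alph A B) - Ld')"
  have "{u \<in> lists A. \<forall>x\<in>words_of_len B (length u). comb u x \<in> Ld'} = lists A - ?M"
  proof (rule set_eqI)
    fix u
    show "u \<in> {u \<in> lists A. \<forall>x\<in>words_of_len B (length u). comb u x \<in> Ld'} \<longleftrightarrow> u \<in> lists A - ?M"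
    proof
      assume u: "u \<in> {u \<in> lists A. \<forall>x\<in>words_of_len B (length u). comb u x \<in> Ld'}"
      have "u \<notin> ?M"
      proof
        assume "u \<in> ?M"
        then obtain w where w: "w \<in> lists (ext_alph A B)" "w \<notin> Ld'" "u = map hproj w" by blast
        have "comb u (map (\<lambda>p. last (snd p)) w) = w" using comb_decomp(1)[OF w(1)] w(3) by simp
        moreover have "map (\<lambda>p. last (snd p)) w \<in> words_of_len B (length u)" using comb_decomp(2)[OF w(1)] w(3) by simp
        ultimately show False using u w(2) by force
      qed
      then show "u \<in> lists A - ?M" using u by blast
    next
      assume u: "u \<in> lists A - ?M"
      have "comb u x \<in> Ld'" if x: "x \<in> words_of_len B (length u)" for x
      proof (rule ccontr)
        assume "comb u x \<notin> Ld'"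
        moreover have "comb u x \<in> lists (ext_alph A B)" using comb_lists x u by blast
        moreover have "map hproj (comb u x) = u" using x by (intro map_hproj_comb) (simp add: words_of_len_mem)
        ultimately have "u \<in> ?M" by (metis DiffI image_eqI)
        then show False using u by blast
      qed
      then show "u \<in> {u \<in> lists A. \<forall>x\<in>words_of_len B (length u). comb u x \<in> Ld'}" using u by blast
    qed
  qed
  moreover have "regular_on A ?M"
    by (rule regular_image[OF regular_diff[OF regular_lists assms] hproj_ext])
  ultimately show ?thesis using regular_compl by metis
qed



lemma step_fwd:
  fixes f :: "('a \<times> nat list) list \<Rightarrow> 'g list option"
  assumes IH: "\<And>(A :: ('a \<times> nat list) set) (f :: ('a \<times> nat list) list \<Rightarrow> 'g list option). LexG k A f \<Longrightarrow> GA k A f"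
    and L: "LexG (Suc k) A f"
  shows "GA (Suc k) A f"
proof -
  obtain B r g where oa: "ordered_alphabet B r" and Lg': "LexG k (ext_alph A B) g"
    and fm: "\<forall>u\<in>lists A. f u = maplex B r g u"
    using L by auto
  obtain Bs rs Ld' Luniv Lg where D': "GAdata k (ext_alph A B) Bs rs Ld' Luniv Lg"
    and ag': "\<forall>w\<in>lists (ext_alph A B). g w = gout k Bs rs Ld' Luniv Lg w"
    using IH[OF Lg'] unfolding GA_def by iprover
  define Ldom where "Ldom = {u \<in> lists A. \<forall>x\<in>words_of_len B (length u). comb u x \<in> Ld'}"
  note DD = D'[unfolded GAdata_def]
  have oas: "\<forall>i<k. ordered_alphabet (Bs i) (rs i)" using DD by (elim conjE)
  have rLd': "regular_on (ext_alph A B) Ld'" using DD by (elim conjE)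
  have rU: "regular_on (extk (ext_alph A B) k Bs) Luniv" using DD by (elim conjE)
  have rG: "\<forall>\<gamma>. regular_on (extk (ext_alph A B) k Bs) (Lg \<gamma>)" using DD by (elim conjE)
  have uq: "\<forall>u\<in>Ld'. \<forall>z\<in>words_of_len (prod_alph k Bs) (length u). combk u z \<in> Luniv \<longrightarrow> (\<exists>!\<gamma>. combk u z \<in> Lg \<gamma>)"
    using DD by (elim conjE)
  have D: "GAdata (Suc k) A (cons_fn B Bs) (cons_fn r rs) Ldom Luniv Lg"
    unfolding GAdata_def
  proof (intro conjI allI ballI impI)
    fix i assume "i < Suc k"
    then show "ordered_alphabet (cons_fn B Bs i) (cons_fn r rs i)" using oa oas by (cases i) auto
  next
    show "regular_on A Ldom" unfolding Ldom_def by (rule Ldom_regular[OF rLd'])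
    show "regular_on (extk A (Suc k) (cons_fn B Bs)) Luniv" using rU by (simp add: extk_Suc)
    fix \<gamma> show "regular_on (extk A (Suc k) (cons_fn B Bs)) (Lg \<gamma>)" using rG by (simp add: extk_Suc)
  next
    fix u z assume u: "u \<in> Ldom" and z: "z \<in> words_of_len (prod_alph (Suc k) (cons_fn B Bs)) (length u)"
      and uz: "combk u z \<in> Luniv"
    obtain x y where x: "x \<in> words_of_len B (length u)" and y: "y \<in> words_of_len (prod_alph k Bs) (length u)"
      and zz: "z = zc x y" using z unfolding words_Suc by blast
    have lx: "length x = length u" "length y = length u" using x y by (simp_all add: words_of_len_mem)
    have cu: "comb u x \<in> Ld'" using u x unfolding Ldom_def by blast
    have cz: "combk (comb u x) y = combk u z" using combk_comb[of u x y] lx zz by simp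
    have "y \<in> words_of_len (prod_alph k Bs) (length (comb u x))" using y lx by simp
    then show "\<exists>!\<gamma>. combk u z \<in> Lg \<gamma>" using uq cu uz cz by metis
  qed
  have agree: "f u = gout (Suc k) (cons_fn B Bs) (cons_fn r rs) Ldom Luniv Lg u" if u: "u \<in> lists A" for u
  proof (cases "u \<in> Ldom")
    case True
    have "\<forall>x\<in>words_of_len B (length u). g (comb u x) = gout k Bs rs Ld' Luniv Lg (comb u x) \<and> comb u x \<in> Ld'"
      using True ag' comb_lists[OF u] unfolding Ldom_def by blast
    then have "maplex B r g u = Some (map (\<lambda>z. THE \<gamma>. combk u z \<in> Lg \<gamma>)
     (sorted_enum (comp_order (Suc k) (cons_fn r rs)) {z \<in> words_of_len (prod_alph (Suc k) (cons_fn B Bs)) (length u). combk u z \<in> Luniv}))"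
      by (rule maplex_gout[OF oa oas])
    then show ?thesis using fm u True unfolding gout_def by simp
  next
    case False
    then obtain x where x: "x \<in> words_of_len B (length u)" and nx: "comb u x \<notin> Ld'"
      using u unfolding Ldom_def by blast
    have "g (comb u x) = None" using ag' comb_lists[OF u x] nx unfolding gout_def by simp
    then have "maplex B r g u = None" by (rule maplex_None[OF oa x])
    then show ?thesis using fm u False unfolding gout_def by simp
  qed
  show ?thesis unfolding GA_def
    by (rule exI[of _ "cons_fn B Bs"], rule exI[of _ "cons_fn r rs"], rule exI[of _ Ldom], rule exI[of _ Luniv], rule exI[of _ Lg])
       (intro conjI D ballI agree)
qed

lemma GA_nondegenerate:
  assumes "GA (Suc k) A f"
  shows "\<exists>Bs rs Ldom Luniv Lg. GAdata (Suc k) A Bs rs Ldom Luniv Lg \<and> (\<forall>u\<in>lists A. f u = gout (Suc k) Bs rs Ldom Luniv Lg u) \<and> Bs 0 \<noteq> {}"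
proof -
  obtain Bs rs Ldom Luniv Lg where D: "GAdata (Suc k) A Bs rs Ldom Luniv Lg"
    and ag: "\<forall>u\<in>lists A. f u = gout (Suc k) Bs rs Ldom Luniv Lg u"
    using assms unfolding GA_def by iprover
  show ?thesis
  proof (cases "Bs 0 = {}")
    case False
    then show ?thesis using D ag by blast
  next
    case True
    have D2: "GAdata (Suc k) A (\<lambda>_. {0}) (\<lambda>_ _ _. False) Ldom Luniv Lg" by (rule degenerate(1)[OF D True])
    have ag2: "\<forall>u\<in>lists A. f u = gout (Suc k) (\<lambda>_. {0}) (\<lambda>_ _ _. False) Ldom Luniv Lg u"
      using ag degenerate(2)[OF D True] by simp
    show ?thesis
      by (rule exI[of _ "\<lambda>_. {0}"], rule exI[of _ "\<lambda>_ _ _. False"], rule exI[of _ Ldom], rule exI[of _ Luniv], rule exI[of _ Lg])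
         (simp add: D2 ag2)
  qed
qed

lemma step_bwd:
  fixes f :: "('a \<times> nat list) list \<Rightarrow> 'g list option"
  assumes IH: "\<And>(A :: ('a \<times> nat list) set) (f :: ('a \<times> nat list) list \<Rightarrow> 'g list option). GA k A f \<Longrightarrow> LexG k A f"
    and G: "GA (Suc k) A f"
  shows "LexG (Suc k) A f"
proof -
  obtain Bs2 rs2 Ldom Luniv Lg where D2: "GAdata (Suc k) A Bs2 rs2 Ldom Luniv Lg"
    and ag2: "\<forall>u\<in>lists A. f u = gout (Suc k) Bs2 rs2 Ldom Luniv Lg u" and ne: "Bs2 0 \<noteq> {}"
    using GA_nondegenerate[OF G] by iprover
  define B where "B = Bs2 0"
  define r where "r = rs2 0"
  define Bs where "Bs = (\<lambda>i. Bs2 (Suc i))"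
  define rs where "rs = (\<lambda>i. rs2 (Suc i))"
  have e1: "Bs2 = cons_fn B Bs" unfolding B_def Bs_def by (rule cons_fn_split[symmetric])
  have e2: "rs2 = cons_fn r rs" unfolding r_def rs_def by (rule cons_fn_split[symmetric])
  have D: "GAdata (Suc k) A (cons_fn B Bs) (cons_fn r rs) Ldom Luniv Lg" using D2 e1 e2 by simp
  have ag: "\<forall>u\<in>lists A. f u = gout (Suc k) (cons_fn B Bs) (cons_fn r rs) Ldom Luniv Lg u" using ag2 e1 e2 by simp
  note DD = D[unfolded GAdata_def]
  have oas2: "\<forall>i<Suc k. ordered_alphabet (cons_fn B Bs i) (cons_fn r rs i)" using DD by (elim conjE)
  have rLd: "regular_on A Ldom" using DD by (elim conjE)
  have rU: "regular_on (extk A (Suc k) (cons_fn B Bs)) Luniv" using DD by (elim conjE)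
  have rG: "\<forall>\<gamma>. regular_on (extk A (Suc k) (cons_fn B Bs)) (Lg \<gamma>)" using DD by (elim conjE)
  have uq: "\<forall>u\<in>Ldom. \<forall>z\<in>words_of_len (prod_alph (Suc k) (cons_fn B Bs)) (length u). combk u z \<in> Luniv \<longrightarrow> (\<exists>!\<gamma>. combk u z \<in> Lg \<gamma>)"
    using DD by (elim conjE)
  have oa: "ordered_alphabet B r" using oas2 by (metis cons_fn_0 zero_less_Suc)
  have oas: "\<forall>i<k. ordered_alphabet (Bs i) (rs i)" using oas2 by (metis cons_fn_Suc Suc_mono)
  define Ld' where "Ld' = {w \<in> lists (ext_alph A B). map hproj w \<in> Ldom}"
  define g where "g = gout k Bs rs Ld' Luniv Lg"
  have D': "GAdata k (ext_alph A B) Bs rs Ld' Luniv Lg"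
    unfolding GAdata_def
  proof (intro conjI)
    show "\<forall>i<k. ordered_alphabet (Bs i) (rs i)" by (rule oas)
    show "regular_on (ext_alph A B) Ld'" unfolding Ld'_def by (rule regular_vimage[OF rLd hproj_ext])
    show "regular_on (extk (ext_alph A B) k Bs) Luniv" using rU by (simp add: extk_Suc)
    show "\<forall>\<gamma>. regular_on (extk (ext_alph A B) k Bs) (Lg \<gamma>)" using rG by (simp add: extk_Suc)
    show "\<forall>w\<in>Ld'. \<forall>y\<in>words_of_len (prod_alph k Bs) (length w). combk w y \<in> Luniv \<longrightarrow> (\<exists>!\<gamma>. combk w y \<in> Lg \<gamma>)"
    proof (intro ballI impI)
      fix w y assume w: "w \<in> Ld'" and y: "y \<in> words_of_len (prod_alph k Bs) (length w)" and wy: "combk w y \<in> Luniv"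
      have wl: "w \<in> lists (ext_alph A B)" and wd: "map hproj w \<in> Ldom" using w unfolding Ld'_def by auto
      define u where "u = map hproj w"
      define x where "x = map (\<lambda>p. last (snd p)) w"
      have cux: "comb u x = w" unfolding u_def x_def by (rule comb_decomp(1)[OF wl])
      have x: "x \<in> words_of_len B (length w)" unfolding x_def by (rule comb_decomp(2)[OF wl])
      have lu: "length u = length w" unfolding u_def by simp
      have lx: "length x = length w" "length y = length w" using x y by (simp_all add: words_of_len_mem)
      have z: "zc x y \<in> words_of_len (prod_alph (Suc k) (cons_fn B Bs)) (length u)"
        unfolding words_Suc using x y lu by auto
      have "combk u (zc x y) = combk w y" using combk_comb[of u x y] lx lu cux by simp
      then show "\<exists>!\<gamma>. combk w y \<in> Lg \<gamma>" using uq wd z wy unfolding u_def[symmetric] by metis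
    qed
  qed
  have "GA k (ext_alph A B) g" unfolding GA_def g_def
    by (rule exI[of _ Bs], rule exI[of _ rs], rule exI[of _ Ld'], rule exI[of _ Luniv], rule exI[of _ Lg])
       (simp add: D')
  then have Lg': "LexG k (ext_alph A B) g" by (rule IH)
  have agree: "f u = maplex B r g u" if u: "u \<in> lists A" for u
  proof (cases "u \<in> Ldom")
    case True
    have "\<forall>x\<in>words_of_len B (length u). g (comb u x) = gout k Bs rs Ld' Luniv Lg (comb u x) \<and> comb u x \<in> Ld'"
    proof
      fix x assume x: "x \<in> words_of_len B (length u)"
      have "map hproj (comb u x) = u" using x by (intro map_hproj_comb) (simp add: words_of_len_mem)
      then show "g (comb u x) = gout k Bs rs Ld' Luniv Lg (comb u x) \<and> comb u x \<in> Ld'"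
        using comb_lists[OF u x] True unfolding g_def Ld'_def by simp
    qed
    then have "maplex B r g u = Some (map (\<lambda>z. THE \<gamma>. combk u z \<in> Lg \<gamma>)
     (sorted_enum (comp_order (Suc k) (cons_fn r rs)) {z \<in> words_of_len (prod_alph (Suc k) (cons_fn B Bs)) (length u). combk u z \<in> Luniv}))"
      by (rule maplex_gout[OF oa oas])
    then show ?thesis using ag u True unfolding gout_def by simp
  next
    case False
    obtain b where b: "b \<in> B" using ne unfolding B_def by blast
    define x where "x = replicate (length u) b"
    have x: "x \<in> words_of_len B (length u)" unfolding x_def using b by (simp add: words_of_len_mem set_replicate_conv_if)
    have "map hproj (comb u x) = u" using x by (intro map_hproj_comb) (simp add: words_of_len_mem)
    then have "comb u x \<notin> Ld'" using False unfolding Ld'_def by simp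
    then have "g (comb u x) = None" unfolding g_def gout_def by simp
    then have "maplex B r g u = None" by (rule maplex_None[OF oa x])
    then show ?thesis using ag u False unfolding gout_def by simp
  qed
  show ?thesis
    using oa Lg' agree by auto
qed



lemma LexG_GA:
  fixes f :: "('a \<times> nat list) list \<Rightarrow> 'g::finite list option"
  shows "LexG k A f \<longleftrightarrow> GA k A f"
proof (induction k arbitrary: A f)
  case 0 then show ?case by (rule base_case)
next
  case (Suc k)
  show ?case
  proof
    have ih1: "\<And>(A :: ('a \<times> nat list) set) (f :: ('a \<times> nat list) list \<Rightarrow> 'g list option). LexG k A f \<Longrightarrow> GA k A f"
      using Suc.IH by blast
    have ih2: "\<And>(A :: ('a \<times> nat list) set) (f :: ('a \<times> nat list) list \<Rightarrow> 'g list option). GA k A f \<Longrightarrow> LexG k A f"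
      using Suc.IH by blast
    assume "LexG (Suc k) A f" then show "GA (Suc k) A f" using step_fwd[OF ih1] by blast
  next
    have ih2: "\<And>(A :: ('a \<times> nat list) set) (f :: ('a \<times> nat list) list \<Rightarrow> 'g list option). GA k A f \<Longrightarrow> LexG k A f"
      using Suc.IH by blast
    assume "GA (Suc k) A f" then show "LexG (Suc k) A f" using step_bwd[OF ih2] by blast
  qed
qed

lemma base_alph_mem: "p \<in> base_alph \<longleftrightarrow> snd p = []"
  by (cases p) (auto simp: base_alph_def)

lemma extk_base: "extk base_alph k Bs = sig_alph k Bs"
  unfolding extk_def sig_alph_def by (auto simp: base_alph_def)

lemma combk_base: "w \<in> lists base_alph \<Longrightarrow> combk w z = zip (map fst w) z"
proof (induction w arbitrary: z)
  case Nil then show ?case by (simp add: combk_def)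
next
  case (Cons p w)
  then show ?case by (cases z; cases p) (auto simp: combk_def base_alph_mem)
qed

lemma base_embed: "map (\<lambda>a. (a, [])) u \<in> lists base_alph" "map fst (map (\<lambda>a. (a, [])) u) = u"
  by (auto simp: base_alph_mem comp_def)

lemma base_inj: "w \<in> lists base_alph \<Longrightarrow> map (\<lambda>a. (a, [])) (map fst w) = w"
  by (induction w) (auto simp: base_alph_mem)

lemma GA_to_auto:
  fixes f :: "'a list \<Rightarrow> 'g list option"
  assumes "GA k base_alph (\<lambda>w. f (map fst w))"
  shows "Lex_automatic k f"
proof -
  obtain Bs rs Ldom Luniv Lg where D: "GAdata k base_alph Bs rs Ldom Luniv Lg"
    and ag: "\<forall>w\<in>lists base_alph. f (map fst w) = gout k Bs rs Ldom Luniv Lg w"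
    using assms unfolding GA_def by iprover
  note DD = D[unfolded GAdata_def extk_base]
  have oas: "\<forall>i<k. ordered_alphabet (Bs i) (rs i)" using DD by (elim conjE)
  have rLd: "regular_on base_alph Ldom" using DD by (elim conjE)
  have rU: "regular_on (sig_alph k Bs) Luniv" using DD by (elim conjE)
  have rG: "\<forall>\<gamma>. regular_on (sig_alph k Bs) (Lg \<gamma>)" using DD by (elim conjE)
  have uq: "\<forall>u\<in>Ldom. \<forall>z\<in>words_of_len (prod_alph k Bs) (length u). combk u z \<in> Luniv \<longrightarrow> (\<exists>!\<gamma>. combk u z \<in> Lg \<gamma>)"
    using DD by (elim conjE)
  have Lsub: "Ldom \<subseteq> lists base_alph" by (rule regular_sub[OF rLd])
  define Lda where "Lda = map fst ` Ldom"
  have T: "is_lex_auto_transducer k Bs rs Lda Luniv Lg"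
    unfolding is_lex_auto_transducer_def
  proof (intro conjI)
    show "\<forall>i<k. ordered_alphabet (Bs i) (rs i)" by (rule oas)
    show "regular_on UNIV Lda" unfolding Lda_def by (rule regular_image[OF rLd]) simp
    show "regular_on (sig_alph k Bs) Luniv" by (rule rU)
    show "\<forall>\<gamma>. regular_on (sig_alph k Bs) (Lg \<gamma>)" by (rule rG)
    show "\<forall>u\<in>Lda. \<forall>x\<in>words_of_len (prod_alph k Bs) (length u). zip u x \<in> Luniv \<longrightarrow> (\<exists>!\<gamma>. zip u x \<in> Lg \<gamma>)"
    proof (intro ballI impI)
      fix u x assume u: "u \<in> Lda" and x: "x \<in> words_of_len (prod_alph k Bs) (length u)" and ux: "zip u x \<in> Luniv"
      obtain w where w: "w \<in> Ldom" "u = map fst w" using u unfolding Lda_def by blast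
      have c: "combk w x = zip u x" using combk_base[of w x] w Lsub by blast
      have "x \<in> words_of_len (prod_alph k Bs) (length w)" using x w by simp
      then show "\<exists>!\<gamma>. zip u x \<in> Lg \<gamma>" using uq w(1) ux c by metis
    qed
  qed
  have "f = lex_auto_output k Bs rs Lda Luniv Lg"
  proof (rule ext)
    fix u :: "'a list"
    define w where "w = map (\<lambda>a. (a, [] :: nat list)) u"
    have wl: "w \<in> lists base_alph" and wu: "map fst w = u" unfolding w_def by (rule base_embed)+
    have fu: "f u = gout k Bs rs Ldom Luniv Lg w" using ag wl wu by metis
    have dom: "u \<in> Lda \<longleftrightarrow> w \<in> Ldom"
    proof
      assume "u \<in> Lda"
      then obtain w' where w': "w' \<in> Ldom" "u = map fst w'" unfolding Lda_def by blast
      have "w' \<in> lists base_alph" using w'(1) Lsub by blast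
      then have "w = w'" unfolding w_def w'(2) by (rule base_inj)
      then have "w' = w" by simp
      then show "w \<in> Ldom" using w' by simp
    next
      assume "w \<in> Ldom" then show "u \<in> Lda" unfolding Lda_def using wu by blast
    qed
    have c: "combk w z = zip u z" for z using combk_base[OF wl, of z] wu by simp
    have lw: "length w = length u" using wu by auto
    show "f u = lex_auto_output k Bs rs Lda Luniv Lg u"
      unfolding fu gout_def lex_auto_output_def dom c lw by simp
  qed
  then show ?thesis unfolding Lex_automatic_def using T by blast
qed

lemma auto_to_GA:
  fixes f :: "'a list \<Rightarrow> 'g list option"
  assumes "Lex_automatic k f"
  shows "GA k base_alph (\<lambda>w. f (map fst w))"
proof -
  obtain Bs rs Ldom Luniv Lg where T: "is_lex_auto_transducer k Bs rs Ldom Luniv Lg"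
    and fe: "f = lex_auto_output k Bs rs Ldom Luniv Lg"
    using assms unfolding Lex_automatic_def by iprover
  note TT = T[unfolded is_lex_auto_transducer_def]
  have oas: "\<forall>i<k. ordered_alphabet (Bs i) (rs i)" using TT by (elim conjE)
  have rLd: "regular_on UNIV Ldom" using TT by (elim conjE)
  have rU: "regular_on (sig_alph k Bs) Luniv" using TT by (elim conjE)
  have rG: "\<forall>\<gamma>. regular_on (sig_alph k Bs) (Lg \<gamma>)" using TT by (elim conjE)
  have uq: "\<forall>u\<in>Ldom. \<forall>x\<in>words_of_len (prod_alph k Bs) (length u). zip u x \<in> Luniv \<longrightarrow> (\<exists>!\<gamma>. zip u x \<in> Lg \<gamma>)"
    using TT by (elim conjE)
  define Ld' where "Ld' = {w \<in> lists base_alph. map fst w \<in> Ldom}"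
  have D: "GAdata k base_alph Bs rs Ld' Luniv Lg"
    unfolding GAdata_def extk_base
  proof (intro conjI)
    show "\<forall>i<k. ordered_alphabet (Bs i) (rs i)" by (rule oas)
    show "regular_on base_alph Ld'" unfolding Ld'_def by (rule regular_vimage[OF rLd]) simp
    show "regular_on (sig_alph k Bs) Luniv" by (rule rU)
    show "\<forall>\<gamma>. regular_on (sig_alph k Bs) (Lg \<gamma>)" by (rule rG)
    show "\<forall>w\<in>Ld'. \<forall>z\<in>words_of_len (prod_alph k Bs) (length w). combk w z \<in> Luniv \<longrightarrow> (\<exists>!\<gamma>. combk w z \<in> Lg \<gamma>)"
    proof (intro ballI impI)
      fix w z assume w: "w \<in> Ld'" and z: "z \<in> words_of_len (prod_alph k Bs) (length w)" and wz: "combk w z \<in> Luniv"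
      have wl: "w \<in> lists base_alph" and wd: "map fst w \<in> Ldom" using w unfolding Ld'_def by auto
      have c: "combk w z = zip (map fst w) z" by (rule combk_base[OF wl])
      have "z \<in> words_of_len (prod_alph k Bs) (length (map fst w))" using z by simp
      then show "\<exists>!\<gamma>. combk w z \<in> Lg \<gamma>" using uq wd wz c by metis
    qed
  qed
  have ag: "f (map fst w) = gout k Bs rs Ld' Luniv Lg w" if wl: "w \<in> lists base_alph" for w
  proof -
    have dom: "map fst w \<in> Ldom \<longleftrightarrow> w \<in> Ld'" unfolding Ld'_def using wl by simp
    have c: "combk w z = zip (map fst w) z" for z by (rule combk_base[OF wl])
    show ?thesis unfolding fe lex_auto_output_def gout_def dom c by simp
  qed
  show ?thesis unfolding GA_def
    by (rule exI[of _ Bs], rule exI[of _ rs], rule exI[of _ Ld'], rule exI[of _ Luniv], rule exI[of _ Lg])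
       (intro conjI D ballI ag)
qed

theorem mainTheorem5:
  fixes f :: "'a::finite list \<Rightarrow> 'g::finite list option" and k :: nat
  assumes "k \<ge> 1"
  shows "Lex k f \<longleftrightarrow> Lex_automatic k f"
  unfolding Lex_def LexG_GA using GA_to_auto auto_to_GA by blast


end
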